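(* Let $m\ge2$ and $\Gamma=\Gamma_{SD_{8m}}$. (1) If $m$ is even: $\mathrm{Spec}(\Gamma)=\{[0]^{2m-2},[-1]^1,[\tfrac{1+\sqrt{16m-7}}{2}]^1,[\tfrac{1-\sqrt{16m-7}}{2}]^1\}$, $E(\Gamma)=1+\sqrt{16m-7}$; $\mathrm{L\text{-}Spec}(\Gamma)=\{[0]^1,[2]^{2m-2},[2m+1]^2\}$, $LE(\Gamma)=\frac{4(2m-1)(2m-2)}{2m+1}+4$; $\mathrm{Q\text{-}Spec}(\Gamma)=\{[2]^{2m-2},[2m-1]^1,[\tfrac{2m+3+\sqrt{(2m-1)(2m+7)}}{2}]^1,[\tfrac{2m+3-\sqrt{(2m-1)(2m+7)}}{2}]^1\}$, $SE(\Gamma)=\frac{4(2m-1)(2m-2)}{2m+1}+(2m-1)(\sqrt{1+\frac{8}{2m-1}}-1)$. (2) If $m$ is odd: $\mathrm{Spec}(\Gamma)=\{[0]^{2m},[4\sqrt{\tfrac{m-1}{2}}]^1,[-4\sqrt{\tfrac{m-1}{2}}]^1\}$, $E(\Gamma)=8\sqrt{\frac{m-1}{2}}$; $\mathrm{L\text{-}Spec}(\Gamma)=\mathrm{Q\text{-}Spec}(\Gamma)=\{[0]^1,[4]^{2m-3},[2(m-1)]^3,[2(m+1)]^1\}$, $LE(\Gamma)=SE(\Gamma)=\frac{16(m-1)(m-3)}{m+1}+8$.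
   Context: $SD_{8m}=\langle x,y\mid x^{4m}=y^2=1,\ yxy=x^{2m-1}\rangle$. For a finite non-abelian group $G$ with center $Z(G)$, the NCCC-graph $\Gamma_G$ has vertex set $\{x^G: x\in G\setminus Z(G)\}$ ($x^G$ the conjugacy class of $x$), distinct vertices $x^G,y^G$ adjacent iff $x'y'\neq y'x'$ for all $x'\in x^G,y'\in y^G$. For a simple graph with adjacency matrix $A$, degree matrix $D$, $L=D-A$, $Q=D+A$; Spec, L-Spec, Q-Spec are eigenvalue multisets of $A,L,Q$, $[\lambda]^k$ meaning eigenvalue $\lambda$ of multiplicity $k$. $E=\sum_{\lambda\in\mathrm{Spec}}|\lambda|$; with $\Delta=2|E(\mathcal G)|/|V(\mathcal G)|$, $LE=\sum_{\beta\in\mathrm{L\text{-}Spec}}|\beta-\Delta|$, $SE=\sum_{\gamma\in\mathrm{Q\text{-}Spec}}|\gamma-\Delta|$. *)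

theory Defs
  imports "HOL-Algebra.Group" "Jordan_Normal_Form.Char_Poly"
begin

definition grp_center :: "('a, 'b) monoid_scheme \<Rightarrow> 'a set" where
  "grp_center G = {z \<in> carrier G. \<forall>g \<in> carrier G. z \<otimes>\<^bsub>G\<^esub> g = g \<otimes>\<^bsub>G\<^esub> z}"

definition conj_class :: "('a, 'b) monoid_scheme \<Rightarrow> 'a \<Rightarrow> 'a set" where
  "conj_class G x = {g \<otimes>\<^bsub>G\<^esub> x \<otimes>\<^bsub>G\<^esub> inv\<^bsub>G\<^esub> g | g. g \<in> carrier G}"

definition nccc_vertices :: "('a, 'b) monoid_scheme \<Rightarrow> 'a set set" where
  "nccc_vertices G = conj_class G ` (carrier G - grp_center G)"

definition nccc_adj :: "('a, 'b) monoid_scheme \<Rightarrow> 'a set \<Rightarrow> 'a set \<Rightarrow> bool" where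
  "nccc_adj G X Y \<longleftrightarrow> X \<noteq> Y \<and>
     (\<forall>x' \<in> X. \<forall>y' \<in> Y. x' \<otimes>\<^bsub>G\<^esub> y' \<noteq> y' \<otimes>\<^bsub>G\<^esub> x')"

text \<open>Concrete model: the pair (i, b) stands for x^i y^(if b then 1 else 0), with
  i taken modulo 4m.  Since y x^j y = x^((2m-1) j), the product is
  (x^i y^a)(x^j y^b) = x^(i + (2m-1)^a j) y^(a+b).\<close>

definition SD :: "nat \<Rightarrow> (int \<times> bool) monoid" where
  "SD m = \<lparr> carrier = {0..<4 * int m} \<times> UNIV,
            mult = (\<lambda>(i, a) (j, b).
               ((i + (if a then (2 * int m - 1) * j else j)) mod (4 * int m), a \<noteq> b)),
            one = (0, False) \<rparr>"

definition SD_x :: "(int \<times> bool)" where "SD_x = (1, False)"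
definition SD_y :: "(int \<times> bool)" where "SD_y = (0, True)"

text \<open>An enumeration of the vertex set; the spectra below do not depend on the choice.\<close>
definition venum :: "'v set \<Rightarrow> nat \<Rightarrow> 'v" where
  "venum V = (SOME f. bij_betw f {..<card V} V)"

definition gdeg :: "'v set \<Rightarrow> ('v \<Rightarrow> 'v \<Rightarrow> bool) \<Rightarrow> 'v \<Rightarrow> nat" where
  "gdeg V adj v = card {w \<in> V. adj v w}"

definition adj_mat :: "'v set \<Rightarrow> ('v \<Rightarrow> 'v \<Rightarrow> bool) \<Rightarrow> real mat" where
  "adj_mat V adj = mat (card V) (card V)
     (\<lambda>(i, j). if adj (venum V i) (venum V j) then 1 else 0)"

definition deg_mat :: "'v set \<Rightarrow> ('v \<Rightarrow> 'v \<Rightarrow> bool) \<Rightarrow> real mat" where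
  "deg_mat V adj = mat (card V) (card V)
     (\<lambda>(i, j). if i = j then real (gdeg V adj (venum V i)) else 0)"

definition lap_mat :: "'v set \<Rightarrow> ('v \<Rightarrow> 'v \<Rightarrow> bool) \<Rightarrow> real mat" where
  "lap_mat V adj = deg_mat V adj - adj_mat V adj"

definition slap_mat :: "'v set \<Rightarrow> ('v \<Rightarrow> 'v \<Rightarrow> bool) \<Rightarrow> real mat" where
  "slap_mat V adj = deg_mat V adj + adj_mat V adj"

text \<open>Multiset of eigenvalues (with algebraic multiplicity) of a real square matrix whose
  characteristic polynomial splits over the reals (true for symmetric matrices).\<close>
definition spec_mset :: "real mat \<Rightarrow> real multiset" where
  "spec_mset A = (THE M. char_poly A = (\<Prod>a\<in>#M. [:- a, 1:]))"

definition gspec :: "'v set \<Rightarrow> ('v \<Rightarrow> 'v \<Rightarrow> bool) \<Rightarrow> real multiset" where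
  "gspec V adj = spec_mset (adj_mat V adj)"
definition lspec :: "'v set \<Rightarrow> ('v \<Rightarrow> 'v \<Rightarrow> bool) \<Rightarrow> real multiset" where
  "lspec V adj = spec_mset (lap_mat V adj)"
definition qspec :: "'v set \<Rightarrow> ('v \<Rightarrow> 'v \<Rightarrow> bool) \<Rightarrow> real multiset" where
  "qspec V adj = spec_mset (slap_mat V adj)"

definition num_edges :: "'v set \<Rightarrow> ('v \<Rightarrow> 'v \<Rightarrow> bool) \<Rightarrow> nat" where
  "num_edges V adj = card {{u, w} | u w. u \<in> V \<and> w \<in> V \<and> adj u w}"

definition avg_deg :: "'v set \<Rightarrow> ('v \<Rightarrow> 'v \<Rightarrow> bool) \<Rightarrow> real" where
  "avg_deg V adj = 2 * real (num_edges V adj) / real (card V)"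

definition energy :: "'v set \<Rightarrow> ('v \<Rightarrow> 'v \<Rightarrow> bool) \<Rightarrow> real" where
  "energy V adj = (\<Sum>e\<in>#gspec V adj. \<bar>e\<bar>)"

definition lap_energy :: "'v set \<Rightarrow> ('v \<Rightarrow> 'v \<Rightarrow> bool) \<Rightarrow> real" where
  "lap_energy V adj = (\<Sum>\<beta>\<in>#lspec V adj. \<bar>\<beta> - avg_deg V adj\<bar>)"

definition slap_energy :: "'v set \<Rightarrow> ('v \<Rightarrow> 'v \<Rightarrow> bool) \<Rightarrow> real" where
  "slap_energy V adj = (\<Sum>\<gamma>\<in>#qspec V adj. \<bar>\<gamma> - avg_deg V adj\<bar>)"

end

theory Submission
  imports Defs
begin


definition dmat :: "nat \<Rightarrow> (nat \<Rightarrow> real) \<Rightarrow> real mat" where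
  "dmat n d = mat n n (\<lambda>(i,j). if i = j then d i else 0)"

lemma char_poly_diag_sim:
  fixes M P Q :: "real mat"
  assumes M: "M \<in> carrier_mat n n" and P: "P \<in> carrier_mat n n" and Q: "Q \<in> carrier_mat n n"
  and QP: "Q * P = 1\<^sub>m n" and MP: "M * P = P * dmat n d"
  shows "char_poly M = (\<Prod>i<n. [:- d i, 1:])"
proof -
  have PQ: "P * Q = 1\<^sub>m n" using mat_mult_left_right_inverse[OF Q P QP] .
  have D: "dmat n d \<in> carrier_mat n n" by (simp add: dmat_def)
  have "M = M * (P * Q)" using M PQ by simp
  also have "\<dots> = (M * P) * Q" using M P Q by (simp add: assoc_mult_mat)
  also have "\<dots> = P * dmat n d * Q" using MP by simp
  finally have eq: "M = P * dmat n d * Q" .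
  have "similar_mat_wit M (dmat n d) P Q" unfolding similar_mat_wit_def
    using M P Q D PQ QP eq by (auto simp: Let_def)
  hence "similar_mat M (dmat n d)" unfolding similar_mat_def by blast
  hence "char_poly M = char_poly (dmat n d)" by (rule char_poly_similar)
  also have "\<dots> = (\<Prod>a\<leftarrow>diag_mat (dmat n d). [:-a,1:])"
    by (rule char_poly_upper_triangular[OF D]) (auto simp: upper_triangular_def dmat_def)
  also have "diag_mat (dmat n d) = map d [0..<n]"
    by (simp add: diag_mat_def dmat_def)
  also have "(\<Prod>a\<leftarrow>map d [0..<n]. [:-a,1:]) = (\<Prod>i\<leftarrow>[0..<n]. [:-d i,1:])"
    by (simp add: comp_def)
  also have "\<dots> = (\<Prod>i<n. [:-d i,1:])"
    by (subst prod.distinct_set_conv_list[symmetric]) (auto simp: atLeast0LessThan)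
  finally show ?thesis .
qed

lemma order_lin: "order a [:-x, 1::real:] = (if a = x then 1 else 0)"
proof (cases "a = x")
  case True then show ?thesis using order_power_n_n[of x 1] by simp
next
  case False then show ?thesis by (auto intro!: order_0I)
qed

lemma order_prod_lin: "order a (\<Prod>x\<in>#X. [:-x,1::real:]) = count X a"
proof (induction X)
  case empty then show ?case by (simp add: order_0I)
next
  case (add x X)
  have "(\<Prod>x\<in>#X. [:-x,1::real:]) \<noteq> 0" by (auto simp: prod_mset_zero_iff)
  moreover have "[:-x,1::real:] \<noteq> 0" by simp
  ultimately have "[:-x,1::real:] * (\<Prod>x\<in>#X. [:-x,1::real:]) \<noteq> 0" by (simp only: mult_eq_0_iff) simp
  from order_mult[OF this, of a] have "order a ([:-x,1::real:] * (\<Prod>x\<in>#X. [:-x,1::real:]))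
     = order a [:-x,1::real:] + order a (\<Prod>x\<in>#X. [:-x,1::real:])" .
  then show ?case using add by (simp only: prod_mset.add_mset order_lin) simp
qed

lemma spec_mset_eqI: assumes "char_poly A = (\<Prod>x\<in>#X. [:-x,1:])"
  shows "spec_mset A = X"
  unfolding spec_mset_def
proof (rule the_equality)
  fix Y assume "char_poly A = (\<Prod>x\<in>#Y. [:-x,1:])"
  then have "\<forall>a. order a (\<Prod>x\<in>#Y. [:-x,1:]) = order a (\<Prod>x\<in>#X. [:-x,1:])" using assms by simp
  then show "Y = X" by (simp add: order_prod_lin multiset_eqI)
qed (rule assms)


lemma mult_mat_entry:
  fixes A B :: "real mat"
  assumes "A \<in> carrier_mat n n" "B \<in> carrier_mat n n" "i < n" "k < n"
  shows "(A * B) $$ (i,k) = (\<Sum>j<n. A $$ (i,j) * B $$ (j,k))"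
  using assms by (simp add: scalar_prod_def atLeast0LessThan)

definition bf :: "nat set \<Rightarrow> real \<Rightarrow> real \<Rightarrow> real \<Rightarrow> real \<Rightarrow> real \<Rightarrow> nat \<Rightarrow> nat \<Rightarrow> real" where
  "bf S xS xT xa xb xg i j = (if i = j then (if i \<in> S then xS else xT)
      else if i \<in> S \<and> j \<in> S then xa else if i \<notin> S \<and> j \<notin> S then xb else xg)"

locale twoblock =
  fixes n :: nat and S :: "nat set" and s0 t0 :: nat
    and dS dT al be ga l1 l2 a1 b1 a2 b2 c11 c12 c21 c22 :: real
  assumes S: "S \<subseteq> {..<n}" and s0: "s0 \<in> S" and t0n: "t0 < n" and t0S: "t0 \<notin> S"
  assumes e1: "(dS + (real (card S) - 1)*al)*a1 + real (card ({..<n} - S))*ga*b1 = l1*a1"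
      and e2: "real (card S)*ga*a1 + (dT + (real (card ({..<n} - S)) - 1)*be)*b1 = l1*b1"
      and e3: "(dS + (real (card S) - 1)*al)*a2 + real (card ({..<n} - S))*ga*b2 = l2*a2"
      and e4: "real (card S)*ga*a2 + (dT + (real (card ({..<n} - S)) - 1)*be)*b2 = l2*b2"
      and i1: "c11*a1 + c12*b1 = 1" and i2: "c11*a2 + c12*b2 = 0"
      and i3: "c21*a1 + c22*b1 = 0" and i4: "c21*a2 + c22*b2 = 1"
begin

abbreviation "T \<equiv> {..<n} - S"
abbreviation "sS \<equiv> real (card S)"
abbreviation "tT \<equiv> real (card T)"

abbreviation "Mf \<equiv> bf S"

definition Pf :: "nat \<Rightarrow> nat \<Rightarrow> real" where
  "Pf j k = (if k = s0 then (if j \<in> S then a1 else b1) else if k = t0 then (if j \<in> S then a2 else b2)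
     else (if j = k then 1 else 0) - (if j = (if k \<in> S then s0 else t0) then 1 else 0))"

definition Qf :: "nat \<Rightarrow> nat \<Rightarrow> real" where
  "Qf i j = (if i = s0 then (if j \<in> S then c11 / sS else c12 / tT)
     else if i = t0 then (if j \<in> S then c21 / sS else c22 / tT)
     else (if j = i then 1 else 0) - (if i \<in> S then (if j \<in> S then 1 / sS else 0) else (if j \<notin> S then 1 / tT else 0)))"

definition df :: "nat \<Rightarrow> real" where
  "df k = (if k = s0 then l1 else if k = t0 then l2 else if k \<in> S then dS - al else dT - be)"

lemma finS: "finite S" using S finite_subset by blast
lemma t0T: "t0 \<in> T" using t0n t0S by auto
lemma sSpos: "sS > 0" using s0 finS by (auto simp: card_gt_0_iff)
lemma tTpos: "tT > 0" using t0T by (auto simp: card_gt_0_iff)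

lemma sum_split: "(\<Sum>j<n. g j) = (\<Sum>j\<in>S. g j) + (\<Sum>j\<in>T. g j)"
  using sum.subset_diff[of S "{..<n}" g] S by (simp add: add.commute)

lemma sumM:
  assumes "i < n"
  shows "(\<Sum>j<n. Mf dS dT al be ga i j * v j) =
    (if i \<in> S then (dS - al) * v i + al * (\<Sum>j\<in>S. v j) + ga * (\<Sum>j\<in>T. v j)
     else (dT - be) * v i + be * (\<Sum>j\<in>T. v j) + ga * (\<Sum>j\<in>S. v j))"
proof (cases "i \<in> S")
  case True
  have fT: "finite T" by simp
  have a: "(\<Sum>j\<in>S. Mf dS dT al be ga i j * v j) = dS * v i + (\<Sum>j\<in>S-{i}. al * v j)"
    using True finS by (simp add: sum.remove[of S i] bf_def)
  have b: "(\<Sum>j\<in>S-{i}. al * v j) = al * ((\<Sum>j\<in>S. v j) - v i)"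
    using True finS by (simp add: sum_distrib_left[symmetric] sum_diff1)
  have c: "(\<Sum>j\<in>T. Mf dS dT al be ga i j * v j) = (\<Sum>j\<in>T. ga * v j)"
    using True by (intro sum.cong) (auto simp: bf_def)
  show ?thesis using True a b c by (simp add: sum_split sum_distrib_left[symmetric] algebra_simps)
next
  case False
  hence iT: "i \<in> T" using assms by auto
  have fT: "finite T" by simp
  have a: "(\<Sum>j\<in>T. Mf dS dT al be ga i j * v j) = dT * v i + (\<Sum>j\<in>T-{i}. be * v j)"
    using iT fT by (simp add: sum.remove[of T i] bf_def)
  have b: "(\<Sum>j\<in>T-{i}. be * v j) = be * ((\<Sum>j\<in>T. v j) - v i)"
    using iT fT by (simp add: sum_distrib_left[symmetric] sum_diff1)
  have c: "(\<Sum>j\<in>S. Mf dS dT al be ga i j * v j) = (\<Sum>j\<in>S. ga * v j)"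
    using False by (intro sum.cong) (auto simp: bf_def)
  show ?thesis using False a b c by (simp add: sum_split sum_distrib_left[symmetric] algebra_simps)
qed

lemma colS:
  assumes "k < n"
  shows "(\<Sum>j\<in>S. Pf j k) = (if k = s0 then sS * a1 else if k = t0 then sS * a2 else 0)"
proof -
  have ts: "t0 \<noteq> s0" using s0 t0S by auto
  show ?thesis
  proof (cases "k = s0")
    case True thus ?thesis by (simp add: Pf_def)
  next
    case ns: False
    show ?thesis
    proof (cases "k = t0")
      case True thus ?thesis using ts by (simp add: Pf_def)
    next
      case False
      have "(\<Sum>j\<in>S. Pf j k) = (\<Sum>j\<in>S. (if j = k then 1 else 0) - (if j = (if k \<in> S then s0 else t0) then 1 else 0))"
        using ns False by (intro sum.cong) (auto simp: Pf_def)
      also have "\<dots> = 0" using finS s0 t0S by (simp add: sum_subtractf)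
      finally show ?thesis using ns False by simp
    qed
  qed
qed

lemma colT:
  assumes "k < n"
  shows "(\<Sum>j\<in>T. Pf j k) = (if k = s0 then tT * b1 else if k = t0 then tT * b2 else 0)"
proof -
  have ts: "t0 \<noteq> s0" using s0 t0S by auto
  show ?thesis
  proof (cases "k = s0")
    case True thus ?thesis by (simp add: Pf_def)
  next
    case ns: False
    show ?thesis
    proof (cases "k = t0")
      case True thus ?thesis using ts by (simp add: Pf_def)
    next
      case False
      have "(\<Sum>j\<in>T. Pf j k) = (\<Sum>j\<in>T. (if j = k then 1 else 0) - (if j = (if k \<in> S then s0 else t0) then 1 else 0))"
        using ns False by (intro sum.cong) (auto simp: Pf_def)
      also have "\<dots> = 0" using s0 t0T assms by (simp add: sum_subtractf)
      finally show ?thesis using ns False by simp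
    qed
  qed
qed

lemma sumQ:
  assumes "i < n"
  shows "(\<Sum>j<n. Qf i j * v j) =
    (if i = s0 then c11 / sS * (\<Sum>j\<in>S. v j) + c12 / tT * (\<Sum>j\<in>T. v j)
     else if i = t0 then c21 / sS * (\<Sum>j\<in>S. v j) + c22 / tT * (\<Sum>j\<in>T. v j)
     else if i \<in> S then v i - (\<Sum>j\<in>S. v j) / sS else v i - (\<Sum>j\<in>T. v j) / tT)"
proof -
  have ts: "t0 \<noteq> s0" using s0 t0S by auto
  consider "i = s0" | "i = t0" | "i \<noteq> s0" "i \<noteq> t0" "i \<in> S" | "i \<noteq> s0" "i \<noteq> t0" "i \<notin> S" by blast
  then show ?thesis
  proof cases
    case 1
    have a: "(\<Sum>j\<in>S. Qf i j * v j) = (\<Sum>j\<in>S. c11 / sS * v j)" using 1 by (intro sum.cong) (auto simp: Qf_def)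
    have b: "(\<Sum>j\<in>T. Qf i j * v j) = (\<Sum>j\<in>T. c12 / tT * v j)" using 1 by (intro sum.cong) (auto simp: Qf_def)
    have a2: "(\<Sum>j\<in>S. c11 / sS * v j) = c11 / sS * (\<Sum>j\<in>S. v j)" by (rule sum_distrib_left[symmetric])
    have b2: "(\<Sum>j\<in>T. c12 / tT * v j) = c12 / tT * (\<Sum>j\<in>T. v j)" by (rule sum_distrib_left[symmetric])
    have "(\<Sum>j<n. Qf i j * v j) = c11 / sS * (\<Sum>j\<in>S. v j) + c12 / tT * (\<Sum>j\<in>T. v j)"
      unfolding sum_split a b a2 b2 ..
    then show ?thesis using 1 by simp
  next
    case 2
    have a: "(\<Sum>j\<in>S. Qf i j * v j) = (\<Sum>j\<in>S. c21 / sS * v j)" using 2 ts by (intro sum.cong) (auto simp: Qf_def)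
    have b: "(\<Sum>j\<in>T. Qf i j * v j) = (\<Sum>j\<in>T. c22 / tT * v j)" using 2 ts by (intro sum.cong) (auto simp: Qf_def)
    have a2: "(\<Sum>j\<in>S. c21 / sS * v j) = c21 / sS * (\<Sum>j\<in>S. v j)" by (rule sum_distrib_left[symmetric])
    have b2: "(\<Sum>j\<in>T. c22 / tT * v j) = c22 / tT * (\<Sum>j\<in>T. v j)" by (rule sum_distrib_left[symmetric])
    have "(\<Sum>j<n. Qf i j * v j) = c21 / sS * (\<Sum>j\<in>S. v j) + c22 / tT * (\<Sum>j\<in>T. v j)"
      unfolding sum_split a b a2 b2 ..
    then show ?thesis using 2 ts by simp
  next
    case 3
    have a: "(\<Sum>j\<in>S. Qf i j * v j) = (\<Sum>j\<in>S. (if j = i then v j else 0) - v j / sS)" using 3 by (intro sum.cong) (auto simp: Qf_def algebra_simps)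
    have b: "(\<Sum>j\<in>T. Qf i j * v j) = 0" using 3 by (intro sum.neutral) (auto simp: Qf_def)
    show ?thesis using 3 a b finS by (simp add: sum_split sum_subtractf sum_divide_distrib[symmetric])
  next
    case 4
    hence iT: "i \<in> T" using assms by auto
    have a: "(\<Sum>j\<in>T. Qf i j * v j) = (\<Sum>j\<in>T. (if j = i then v j else 0) - v j / tT)" using 4 by (intro sum.cong) (auto simp: Qf_def algebra_simps)
    have b: "(\<Sum>j\<in>S. Qf i j * v j) = 0" using 4 by (intro sum.neutral) (auto simp: Qf_def)
    show ?thesis using 4 iT a b by (simp add: sum_split sum_subtractf sum_divide_distrib[symmetric])
  qed
qed

lemma QP_entry:
  assumes "i < n" "k < n"
  shows "(\<Sum>j<n. Qf i j * Pf j k) = (if i = k then 1 else 0)"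
proof -
  have ts: "t0 \<noteq> s0" using s0 t0S by auto
  have sp1: "sS \<noteq> 0" using sSpos by linarith
  have sp2: "tT \<noteq> 0" using tTpos by linarith
  show ?thesis
    unfolding sumQ[OF assms(1)] colS[OF assms(2)] colT[OF assms(2)]
    using ts sp1 sp2 i1 i2 i3 i4 s0 t0S assms by (auto simp: Pf_def)
qed

lemma MP_entry:
  assumes "i < n" "k < n"
  shows "(\<Sum>j<n. Mf dS dT al be ga i j * Pf j k) = Pf i k * df k"
proof -
  have ts: "t0 \<noteq> s0" using s0 t0S by auto
  show ?thesis
    unfolding sumM[OF assms(1)] colS[OF assms(2)] colT[OF assms(2)]
    using ts e1 e2 e3 e4 s0 t0S assms by (auto simp: Pf_def df_def algebra_simps)
qed

lemma char_poly_M: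
  "char_poly (mat n n (\<lambda>(i,j). Mf dS dT al be ga i j)) = (\<Prod>k<n. [:- df k, 1:])"
proof (rule char_poly_diag_sim)
  let ?M = "mat n n (\<lambda>(i,j). Mf dS dT al be ga i j)"
  let ?P = "mat n n (\<lambda>(i,j). Pf i j)"
  let ?Q = "mat n n (\<lambda>(i,j). Qf i j)"
  show "?M \<in> carrier_mat n n" "?P \<in> carrier_mat n n" "?Q \<in> carrier_mat n n" by auto
  show "?Q * ?P = 1\<^sub>m n"
  proof (rule eq_matI)
    fix i k assume ik: "i < dim_row (1\<^sub>m n :: real mat)" "k < dim_col (1\<^sub>m n :: real mat)"
    then have "(?Q * ?P) $$ (i,k) = (\<Sum>j<n. ?Q $$ (i,j) * ?P $$ (j,k))" by (intro mult_mat_entry) auto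
    also have "\<dots> = (\<Sum>j<n. Qf i j * Pf j k)" using ik by (intro sum.cong) auto
    also have "\<dots> = (if i = k then 1 else 0)" using ik by (intro QP_entry) auto
    finally show "(?Q * ?P) $$ (i,k) = 1\<^sub>m n $$ (i,k)" using ik by simp
  qed auto
  show "?M * ?P = ?P * dmat n df"
  proof (rule eq_matI)
    fix i k assume ik: "i < dim_row (?P * dmat n df)" "k < dim_col (?P * dmat n df)"
    then have ik': "i < n" "k < n" by (auto simp: dmat_def)
    have "(?M * ?P) $$ (i,k) = (\<Sum>j<n. ?M $$ (i,j) * ?P $$ (j,k))" using ik' by (intro mult_mat_entry) auto
    also have "\<dots> = (\<Sum>j<n. Mf dS dT al be ga i j * Pf j k)" using ik' by (intro sum.cong) auto
    also have "\<dots> = Pf i k * df k" using ik' by (intro MP_entry) auto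
    also have "\<dots> = (\<Sum>j<n. ?P $$ (i,j) * dmat n df $$ (j,k))"
    proof -
      have "(\<Sum>j<n. ?P $$ (i,j) * dmat n df $$ (j,k)) = (\<Sum>j<n. if j = k then Pf i k * df k else 0)"
        using ik' by (intro sum.cong) (auto simp: dmat_def)
      also have "\<dots> = Pf i k * df k" using ik' by (simp add: sum.delta')
      finally show ?thesis by simp
    qed
    also have "\<dots> = (?P * dmat n df) $$ (i,k)" using ik' by (intro mult_mat_entry[symmetric]) (auto simp: dmat_def)
    finally show "(?M * ?P) $$ (i,k) = (?P * dmat n df) $$ (i,k)" .
  qed (auto simp: dmat_def)
qed

lemma prod_df: "(\<Prod>k<n. [:- df k, 1:]) = (\<Prod>x\<in>#{#l1, l2#} + replicate_mset (card S - 1) (dS - al)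
   + replicate_mset (card T - 1) (dT - be). [:-x, 1:])"
proof -
  have ts: "t0 \<noteq> s0" using s0 t0S by auto
  have U: "{..<n} = insert s0 (insert t0 ((S - {s0}) \<union> (T - {t0})))" using S s0 t0n by auto
  have "(\<Prod>k<n. [:- df k, 1:]) = (\<Prod>k\<in>insert s0 (insert t0 ((S - {s0}) \<union> (T - {t0}))). [:- df k, 1:])"
    by (rule arg_cong[OF U])
  also have "\<dots> = [:- df s0, 1:] * ([:- df t0, 1:] * ((\<Prod>k\<in>S-{s0}. [:- df k, 1:]) * (\<Prod>k\<in>T-{t0}. [:- df k, 1:])))"
  proof -
    have f1: "finite (S - {s0})" "finite (T - {t0})" using finS by auto
    have p3: "(\<Prod>k\<in>(S - {s0}) \<union> (T - {t0}). [:- df k, 1:]) = (\<Prod>k\<in>S-{s0}. [:- df k, 1:]) * (\<Prod>k\<in>T-{t0}. [:- df k, 1:])"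
      by (rule prod.union_disjoint) (use f1 in auto)
    have p2: "(\<Prod>k\<in>insert t0 ((S - {s0}) \<union> (T - {t0})). [:- df k, 1:]) = [:- df t0, 1:] * (\<Prod>k\<in>(S - {s0}) \<union> (T - {t0}). [:- df k, 1:])"
      by (rule prod.insert) (use f1 t0S in auto)
    have p1: "(\<Prod>k\<in>insert s0 (insert t0 ((S - {s0}) \<union> (T - {t0}))). [:- df k, 1:]) = [:- df s0, 1:] * (\<Prod>k\<in>insert t0 ((S - {s0}) \<union> (T - {t0})). [:- df k, 1:])"
      by (rule prod.insert) (use f1 ts s0 in auto)
    show ?thesis unfolding p1 p2 p3 ..
  qed
  also have "(\<Prod>k\<in>S-{s0}. [:- df k, 1:]) = (\<Prod>k\<in>S-{s0}. [:- (dS - al), 1:])"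
    by (intro prod.cong) (auto simp: df_def t0S)
  also have "\<dots> = [:- (dS - al), 1:] ^ (card S - 1)" using s0 finS by simp
  also have "(\<Prod>k\<in>T-{t0}. [:- df k, 1:]) = (\<Prod>k\<in>T-{t0}. [:- (dT - be), 1:])"
    using s0 by (intro prod.cong) (auto simp: df_def)
  also have "\<dots> = [:- (dT - be), 1:] ^ (card T - 1)" using t0T by simp
  finally show ?thesis using ts by (simp add: df_def ac_simps)
qed

end

lemma twoblock_spec:
  fixes n s0 t0 :: nat and S :: "nat set" and dS dT al be ga l1 l2 :: real
  defines "p \<equiv> dS + (real (card S) - 1) * al" and "w \<equiv> dT + (real (card ({..<n}-S)) - 1) * be"
    and "q \<equiv> real (card ({..<n}-S)) * ga" and "r \<equiv> real (card S) * ga"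
  assumes "S \<subseteq> {..<n}" "s0 \<in> S" "t0 < n" "t0 \<notin> S" "q \<noteq> 0" "l1 \<noteq> l2"
    "l1^2 - (p + w) * l1 + (p * w - q * r) = 0" "l2^2 - (p + w) * l2 + (p * w - q * r) = 0"
  shows "spec_mset (mat n n (\<lambda>(i,j). bf S dS dT al be ga i j)) = {#l1, l2#}
     + replicate_mset (card S - 1) (dS - al) + replicate_mset (card ({..<n} - S) - 1) (dT - be)"
proof -
  define D where "D = q * (l2 - l1)"
  have D0: "D \<noteq> 0" using assms(9,10) unfolding D_def by simp
  interpret twoblock n S s0 t0 dS dT al be ga l1 l2 q "l1 - p" q "l2 - p"
    "(l2 - p) / D" "- q / D" "- (l1 - p) / D" "q / D"
  proof (unfold_locales)
    show "(dS + (real (card S) - 1) * al) * q + real (card ({..<n} - S)) * ga * (l1 - p) = l1 * q"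
      unfolding p_def q_def by (simp add: algebra_simps)
    show "(dS + (real (card S) - 1) * al) * q + real (card ({..<n} - S)) * ga * (l2 - p) = l2 * q"
      unfolding p_def q_def by (simp add: algebra_simps)
    show "real (card S) * ga * q + (dT + (real (card ({..<n} - S)) - 1) * be) * (l1 - p) = l1 * (l1 - p)"
      using assms(11) unfolding p_def[symmetric] w_def[symmetric] r_def[symmetric] by (simp add: power2_eq_square algebra_simps)
    show "real (card S) * ga * q + (dT + (real (card ({..<n} - S)) - 1) * be) * (l2 - p) = l2 * (l2 - p)"
      using assms(12) unfolding p_def[symmetric] w_def[symmetric] r_def[symmetric] by (simp add: power2_eq_square algebra_simps)
    have X: "(l2 - p) * q - q * (l1 - p) = D" unfolding D_def by (simp add: algebra_simps)
    have "(l2 - p) / D * q + - q / D * (l1 - p) = ((l2 - p) * q - q * (l1 - p)) / D" using D0 by (simp add: field_simps)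
    also have "\<dots> = 1" using X D0 by simp
    finally show "(l2 - p) / D * q + - q / D * (l1 - p) = 1" .
    show "(l2 - p) / D * q + - q / D * (l2 - p) = 0" using D0 by (simp add: field_simps)
    show "- (l1 - p) / D * q + q / D * (l1 - p) = 0" using D0 by (simp add: field_simps)
    have X: "- (l1 - p) * q + q * (l2 - p) = D" unfolding D_def by (simp add: algebra_simps)
    have "- (l1 - p) / D * q + q / D * (l2 - p) = (- (l1 - p) * q + q * (l2 - p)) / D" using D0 by (simp add: field_simps)
    also have "\<dots> = 1" using X D0 by simp
    finally show "- (l1 - p) / D * q + q / D * (l2 - p) = 1" .
  qed (use assms in auto)
  show ?thesis by (rule spec_mset_eqI) (simp add: char_poly_M prod_df)
qed


lemma handshake:
  assumes fin: "finite V" and sym: "\<And>u w. u \<in> V \<Longrightarrow> w \<in> V \<Longrightarrow> adj u w \<Longrightarrow> adj w u"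
    and irr: "\<And>u. u \<in> V \<Longrightarrow> \<not> adj u u"
  shows "2 * num_edges V adj = (\<Sum>v\<in>V. gdeg V adj v)"
proof -
  let ?P = "Sigma V (\<lambda>u. {w\<in>V. adj u w})"
  let ?E = "{{u, w} | u w. u \<in> V \<and> w \<in> V \<and> adj u w}"
  have cP: "card ?P = (\<Sum>v\<in>V. gdeg V adj v)" using fin by (simp add: gdeg_def)
  have PU1: "?P \<subseteq> (\<Union>e\<in>?E. {p\<in>?P. {fst p, snd p} = e})"
  proof
    fix p assume p: "p \<in> ?P"
    obtain a b where ab: "p = (a, b)" by (cases p)
    have "{a, b} \<in> ?E" using p ab by blast
    with p ab show "p \<in> (\<Union>e\<in>?E. {p\<in>?P. {fst p, snd p} = e})" by auto
  qed
  have PU: "?P = (\<Union>e\<in>?E. {p\<in>?P. {fst p, snd p} = e})" using PU1 by blast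
  have finE: "finite ?E"
  proof (rule finite_subset)
    show "?E \<subseteq> Pow V" by auto
  qed (use fin in simp)
  have finP: "finite ?P" using fin by simp
  have "card ?P = card (\<Union>e\<in>?E. {p\<in>?P. {fst p, snd p} = e})" using PU by simp
  also have "\<dots> = (\<Sum>e\<in>?E. card {p\<in>?P. {fst p, snd p} = e})"
  proof (rule card_UN_disjoint)
    show "finite ?E" by (rule finE)
    show "\<forall>e\<in>?E. finite {p\<in>?P. {fst p, snd p} = e}" using finP by simp
    show "\<forall>e1\<in>?E. \<forall>e2\<in>?E. e1 \<noteq> e2 \<longrightarrow> {p\<in>?P. {fst p, snd p} = e1} \<inter> {p\<in>?P. {fst p, snd p} = e2} = {}"
      by blast
  qed
  also have "\<dots> = (\<Sum>e\<in>?E. 2)"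
  proof (rule sum.cong)
    fix e assume "e \<in> ?E"
    then obtain u w where e: "e = {u, w}" "u \<in> V" "w \<in> V" "adj u w" by blast
    have uw: "u \<noteq> w" using e irr by auto
    have wu: "adj w u" using sym e by blast
    have "{p\<in>?P. {fst p, snd p} = e} = {(u, w), (w, u)}"
    proof (rule Set.set_eqI)
      fix p :: "'a \<times> 'a"
      obtain a b where ab: "p = (a, b)" by (cases p)
      have "(a, b) \<in> {p\<in>?P. {fst p, snd p} = e} \<longleftrightarrow> (a, b) \<in> {(u, w), (w, u)}"
      proof
        assume "(a, b) \<in> {p\<in>?P. {fst p, snd p} = e}"
        then have "{a, b} = {u, w}" using e(1) by simp
        then show "(a, b) \<in> {(u, w), (w, u)}" unfolding doubleton_eq_iff by blast
      next
        assume "(a, b) \<in> {(u, w), (w, u)}"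
        then show "(a, b) \<in> {p\<in>?P. {fst p, snd p} = e}"
          using e wu by (auto simp: insert_commute)
      qed
      then show "p \<in> {p\<in>?P. {fst p, snd p} = e} \<longleftrightarrow> p \<in> {(u, w), (w, u)}" using ab by simp
    qed
    then show "card {p\<in>?P. {fst p, snd p} = e} = 2" using uw by simp
  qed simp
  finally show ?thesis using cP unfolding num_edges_def by simp
qed

lemma venum_bij: assumes "finite V" shows "bij_betw (venum V) {..<card V} V"
proof -
  have "\<exists>h. bij_betw h {..<card V} V" using ex_bij_betw_nat_finite[OF assms] by (simp add: atLeast0LessThan)
  then show ?thesis unfolding venum_def by (rule someI_ex)
qed

locale sgraph =
  fixes V :: "'v set" and VS :: "'v set" and adj :: "'v \<Rightarrow> 'v \<Rightarrow> bool" and cS cT :: bool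
  assumes finV: "finite V" and VS: "VS \<subseteq> V"
  and adjV: "\<And>X Y. X \<in> V \<Longrightarrow> Y \<in> V \<Longrightarrow> adj X Y \<longleftrightarrow> X \<noteq> Y \<and>
     (if X \<in> VS \<and> Y \<in> VS then cS else if X \<notin> VS \<and> Y \<notin> VS then cT else True)"
begin

abbreviation "N \<equiv> card V"
abbreviation "f \<equiv> venum V"
definition "SI = {i. i < N \<and> f i \<in> VS}"
definition "ddS = (if cS then card VS - 1 else 0) + card (V - VS)"
definition "ddT = card VS + (if cT then card (V - VS) - 1 else 0)"

lemma bij: "bij_betw f {..<N} V" using venum_bij[OF finV] .
lemma inj: "i < N \<Longrightarrow> j < N \<Longrightarrow> f i = f j \<longleftrightarrow> i = j"
  using bij unfolding bij_betw_def inj_on_def by auto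
lemma fV: "i < N \<Longrightarrow> f i \<in> V" using bij unfolding bij_betw_def by auto

lemma SI_sub: "SI \<subseteq> {..<N}" by (auto simp: SI_def)

lemma cardSI: "card SI = card VS"
proof -
  have "f ` SI = VS"
  proof
    show "f ` SI \<subseteq> VS" by (auto simp: SI_def)
    show "VS \<subseteq> f ` SI"
    proof
      fix X assume "X \<in> VS"
      then have "X \<in> f ` {..<N}" using VS bij unfolding bij_betw_def by auto
      then obtain i where "i < N" "X = f i" by auto
      then show "X \<in> f ` SI" using \<open>X \<in> VS\<close> by (auto simp: SI_def)
    qed
  qed
  moreover have "inj_on f SI" by (rule inj_on_subset[OF _ SI_sub]) (use bij in \<open>auto simp: bij_betw_def\<close>)
  ultimately show ?thesis using card_image by fastforce
qed

lemma cardTI: "card ({..<N} - SI) = card (V - VS)"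
proof -
  have "card ({..<N} - SI) = N - card SI" using SI_sub by (simp add: card_Diff_subset finite_subset)
  also have "\<dots> = card V - card VS" using cardSI by simp
  also have "\<dots> = card (V - VS)" using VS finV by (simp add: card_Diff_subset finite_subset)
  finally show ?thesis .
qed

lemma degS: assumes "X \<in> VS" shows "gdeg V adj X = ddS"
proof -
  have XV: "X \<in> V" using assms VS by auto
  have A: "\<And>w. w \<in> V \<Longrightarrow> adj X w \<longleftrightarrow> X \<noteq> w \<and> (if w \<in> VS then cS else True)"
    using adjV[OF XV] assms by simp
  have E: "{w\<in>V. adj X w} = (if cS then VS - {X} else {}) \<union> (V - VS)"
    using A VS assms by (auto split: if_splits)
  moreover have "finite VS" using VS finV finite_subset by blast
  moreover have "card (if cS then VS - {X} else {}) = (if cS then card VS - 1 else 0)"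
    using assms \<open>finite VS\<close> by simp
  moreover have "card ((if cS then VS - {X} else {}) \<union> (V - VS)) = card (if cS then VS - {X} else {}) + card (V - VS)"
    by (rule card_Un_disjoint) (use finV \<open>finite VS\<close> in auto)
  ultimately show ?thesis unfolding gdeg_def ddS_def E by simp
qed

lemma degT: assumes "X \<in> V" "X \<notin> VS" shows "gdeg V adj X = ddT"
proof -
  have A: "\<And>w. w \<in> V \<Longrightarrow> adj X w \<longleftrightarrow> X \<noteq> w \<and> (if w \<in> VS then True else cT)"
    using adjV[OF assms(1)] assms by simp
  have "{w\<in>V. adj X w} = VS \<union> (if cT then (V - VS) - {X} else {})"
    using A VS assms by (auto split: if_splits)
  moreover have "VS \<inter> (if cT then (V - VS) - {X} else {}) = {}" by auto
  moreover have "finite VS" using VS finV finite_subset by blast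
  ultimately show ?thesis unfolding gdeg_def ddT_def using assms finV
    by (simp add: card_Un_disjoint)
qed

lemma deg_entry: "i < N \<Longrightarrow> real (gdeg V adj (f i)) = (if i \<in> SI then real ddS else real ddT)"
  using degS degT fV by (auto simp: SI_def)

lemma adj_entry: "i < N \<Longrightarrow> j < N \<Longrightarrow> adj (f i) (f j) \<longleftrightarrow> i \<noteq> j \<and>
     (if i \<in> SI \<and> j \<in> SI then cS else if i \<notin> SI \<and> j \<notin> SI then cT else True)"
  using adjV[OF fV fV] inj by (auto simp: SI_def)

lemma adj_mat_eq: "adj_mat V adj = mat N N (\<lambda>(i,j). bf SI 0 0 (if cS then 1 else 0) (if cT then 1 else 0) 1 i j)"
proof (rule eq_matI)
  fix i j assume "i < dim_row (mat N N (\<lambda>(i,j). bf SI 0 0 (if cS then 1 else 0) (if cT then 1 else 0) 1 i j))"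
    "j < dim_col (mat N N (\<lambda>(i,j). bf SI 0 0 (if cS then 1 else 0) (if cT then 1 else 0) 1 i j))"
  then have ij: "i < N" "j < N" by auto
  have A: "adj (f i) (f j) \<longleftrightarrow> i \<noteq> j \<and>
     (if i \<in> SI \<and> j \<in> SI then cS else if i \<notin> SI \<and> j \<notin> SI then cT else True)" by (rule adj_entry[OF ij])
  have D: "real (gdeg V adj (f i)) = (if i \<in> SI then real ddS else real ddT)" by (rule deg_entry[OF ij(1)])
  show "adj_mat V adj $$ (i,j) = mat N N (\<lambda>(i,j). bf SI 0 0 (if cS then 1 else 0) (if cT then 1 else 0) 1 i j) $$ (i,j)"
    using ij unfolding adj_mat_def
    by (cases "i = j"; cases "i \<in> SI"; cases "j \<in> SI"; cases cS; cases cT) (simp_all add: adj_entry deg_entry bf_def)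
qed (simp_all add: adj_mat_def)

lemma lap_mat_eq: "lap_mat V adj = mat N N (\<lambda>(i,j). bf SI (real ddS) (real ddT)
   (if cS then -1 else 0) (if cT then -1 else 0) (-1) i j)"
proof (rule eq_matI)
  fix i j assume "i < dim_row (mat N N (\<lambda>(i,j). bf SI (real ddS) (real ddT) (if cS then -1 else 0) (if cT then -1 else 0) (-1) i j))"
    "j < dim_col (mat N N (\<lambda>(i,j). bf SI (real ddS) (real ddT) (if cS then -1 else 0) (if cT then -1 else 0) (-1) i j))"
  then have ij: "i < N" "j < N" by auto
  have A: "adj (f i) (f j) \<longleftrightarrow> i \<noteq> j \<and>
     (if i \<in> SI \<and> j \<in> SI then cS else if i \<notin> SI \<and> j \<notin> SI then cT else True)" by (rule adj_entry[OF ij])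
  have D: "real (gdeg V adj (f i)) = (if i \<in> SI then real ddS else real ddT)" by (rule deg_entry[OF ij(1)])
  show "lap_mat V adj $$ (i,j) = mat N N (\<lambda>(i,j). bf SI (real ddS) (real ddT) (if cS then -1 else 0) (if cT then -1 else 0) (-1) i j) $$ (i,j)"
    using ij unfolding lap_mat_def deg_mat_def adj_mat_def
    by (cases "i = j"; cases "i \<in> SI"; cases "j \<in> SI"; cases cS; cases cT) (simp_all add: adj_entry deg_entry bf_def)
qed (simp_all add: lap_mat_def deg_mat_def adj_mat_def)

lemma slap_mat_eq: "slap_mat V adj = mat N N (\<lambda>(i,j). bf SI (real ddS) (real ddT)
   (if cS then 1 else 0) (if cT then 1 else 0) 1 i j)"
proof (rule eq_matI)
  fix i j assume "i < dim_row (mat N N (\<lambda>(i,j). bf SI (real ddS) (real ddT) (if cS then 1 else 0) (if cT then 1 else 0) 1 i j))"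
    "j < dim_col (mat N N (\<lambda>(i,j). bf SI (real ddS) (real ddT) (if cS then 1 else 0) (if cT then 1 else 0) 1 i j))"
  then have ij: "i < N" "j < N" by auto
  have A: "adj (f i) (f j) \<longleftrightarrow> i \<noteq> j \<and>
     (if i \<in> SI \<and> j \<in> SI then cS else if i \<notin> SI \<and> j \<notin> SI then cT else True)" by (rule adj_entry[OF ij])
  have D: "real (gdeg V adj (f i)) = (if i \<in> SI then real ddS else real ddT)" by (rule deg_entry[OF ij(1)])
  show "slap_mat V adj $$ (i,j) = mat N N (\<lambda>(i,j). bf SI (real ddS) (real ddT) (if cS then 1 else 0) (if cT then 1 else 0) 1 i j) $$ (i,j)"
    using ij unfolding slap_mat_def deg_mat_def adj_mat_def
    by (cases "i = j"; cases "i \<in> SI"; cases "j \<in> SI"; cases cS; cases cT) (simp_all add: adj_entry deg_entry bf_def)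
qed (simp_all add: slap_mat_def deg_mat_def adj_mat_def)

lemma edges: "2 * num_edges V adj = card VS * ddS + card (V - VS) * ddT"
proof -
  have "2 * num_edges V adj = (\<Sum>v\<in>V. gdeg V adj v)"
    by (rule handshake) (use finV adjV in auto)
  also have "\<dots> = (\<Sum>v\<in>VS. gdeg V adj v) + (\<Sum>v\<in>V - VS. gdeg V adj v)"
    using sum.subset_diff[OF VS finV] by (simp add: add.commute)
  also have "(\<Sum>v\<in>VS. gdeg V adj v) = card VS * ddS" using degS by simp
  also have "(\<Sum>v\<in>V - VS. gdeg V adj v) = card (V - VS) * ddT" using degT by simp
  finally show ?thesis .
qed

end


locale sd =
  fixes m :: nat
  assumes m2: "2 \<le> m"
begin

abbreviation "G \<equiv> SD m"
abbreviation "nn \<equiv> 4 * int m"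
abbreviation "rr \<equiv> 2 * int m - 1"
definition "h0 = (if even m then 2 * int m else int m)"
definition "gg = (if even m then 2 else (4::int))"

lemma nn_pos: "nn > 0" using m2 by simp

lemma carr: "carrier G = {0..<nn} \<times> UNIV" by (simp add: SD_def)
lemma mult: "(i, a) \<otimes>\<^bsub>G\<^esub> (j, b) = ((i + (if a then rr * j else j)) mod nn, a \<noteq> b)"
  by (simp add: SD_def)
lemma one: "\<one>\<^bsub>G\<^esub> = (0, False)" by (simp add: SD_def)

lemma mod_eq_iff: "(a::int) mod nn = b mod nn \<longleftrightarrow> nn dvd (a - b)"
  by (simp add: mod_eq_dvd_iff)

lemma rr_sq: "rr * rr = 1 + nn * (int m - 1)"
  by (simp add: algebra_simps)

lemma inv_rot: assumes "0 \<le> i" "i < nn" shows "inv\<^bsub>G\<^esub> (i, False) = ((- i) mod nn, False)"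
  unfolding m_inv_def
proof (rule the_equality)
  show "((- i) mod nn, False) \<in> carrier G \<and> (i, False) \<otimes>\<^bsub>G\<^esub> ((- i) mod nn, False) = \<one>\<^bsub>G\<^esub> \<and>
    ((- i) mod nn, False) \<otimes>\<^bsub>G\<^esub> (i, False) = \<one>\<^bsub>G\<^esub>"
    using nn_pos by (simp add: carr mult one mod_add_right_eq mod_add_left_eq)
next
  fix y assume y: "y \<in> carrier G \<and> (i, False) \<otimes>\<^bsub>G\<^esub> y = \<one>\<^bsub>G\<^esub> \<and> y \<otimes>\<^bsub>G\<^esub> (i, False) = \<one>\<^bsub>G\<^esub>"
  obtain j b where jb: "y = (j, b)" by (cases y)
  have j: "0 \<le> j" "j < nn" using y jb by (auto simp: carr)
  have "(i + j) mod nn = 0" "b = False" using y jb by (auto simp: mult one)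
  then have "j mod nn = (- i) mod nn" by (simp add: mod_eq_iff mod_eq_0_iff_dvd add.commute)
  then have "j = (- i) mod nn" using j by simp
  then show "y = ((- i) mod nn, False)" using jb \<open>b = False\<close> by simp
qed

lemma inv_ref: assumes "0 \<le> i" "i < nn" shows "inv\<^bsub>G\<^esub> (i, True) = ((- rr * i) mod nn, True)"
  unfolding m_inv_def
proof (rule the_equality)
  have e1: "(i + rr * ((- rr * i) mod nn)) mod nn = 0"
  proof -
    have "(i + rr * ((- rr * i) mod nn)) mod nn = (i + (rr * ((- rr * i) mod nn)) mod nn) mod nn"
      by (rule mod_add_right_eq[symmetric])
    also have "(rr * ((- rr * i) mod nn)) mod nn = (rr * (- rr * i)) mod nn"
      by (rule mod_mult_right_eq)
    also have "(i + (rr * (- rr * i)) mod nn) mod nn = (i + rr * (- rr * i)) mod nn"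
      by (rule mod_add_right_eq)
    also have "i + rr * (- rr * i) = nn * (- (int m - 1) * i)" using rr_sq by (simp add: algebra_simps)
    finally show ?thesis by simp
  qed
  have e2: "((- rr * i) mod nn + rr * i) mod nn = 0"
  proof -
    have "((- rr * i) mod nn + rr * i) mod nn = (- rr * i + rr * i) mod nn" by (rule mod_add_left_eq)
    then show ?thesis by (simp add: algebra_simps)
  qed
  show "((- rr * i) mod nn, True) \<in> carrier G \<and> (i, True) \<otimes>\<^bsub>G\<^esub> ((- rr * i) mod nn, True) = \<one>\<^bsub>G\<^esub> \<and>
    ((- rr * i) mod nn, True) \<otimes>\<^bsub>G\<^esub> (i, True) = \<one>\<^bsub>G\<^esub>"
    using nn_pos e1 e2 by (simp add: carr mult one)
next
  fix y assume y: "y \<in> carrier G \<and> (i, True) \<otimes>\<^bsub>G\<^esub> y = \<one>\<^bsub>G\<^esub> \<and> y \<otimes>\<^bsub>G\<^esub> (i, True) = \<one>\<^bsub>G\<^esub>"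
  obtain j b where jb: "y = (j, b)" by (cases y)
  have j: "0 \<le> j" "j < nn" using y jb by (auto simp: carr)
  have b: "b = True" using y jb by (auto simp: mult one)
  have "(j + rr * i) mod nn = 0" using y jb b by (auto simp: mult one)
  then have d: "nn dvd (j + rr * i)" by (simp add: mod_eq_0_iff_dvd)
  have "j mod nn = (- rr * i) mod nn" unfolding mod_eq_iff using d by (simp add: algebra_simps)
  then have "j = (- rr * i) mod nn" using j by simp
  then show "y = ((- rr * i) mod nn, True)" using jb b by simp
qed

lemma key: "nn dvd ((2 * int m - 2) * x) \<longleftrightarrow> h0 dvd x"
proof -
  have "nn dvd ((2 * int m - 2) * x) \<longleftrightarrow> 2 * (2 * int m) dvd 2 * ((int m - 1) * x)"
    by (simp add: algebra_simps)
  also have "\<dots> \<longleftrightarrow> (2 * int m) dvd ((int m - 1) * x)"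
    using dvd_mult_cancel_left[of 2 "2 * int m" "(int m - 1) * x"] by simp
  also have "\<dots> \<longleftrightarrow> h0 dvd x"
  proof (cases "even m")
    case True
    then obtain h where h: "m = 2 * h" by (auto elim: evenE)
    show ?thesis
    proof
      assume "(2 * int m) dvd ((int m - 1) * x)"
      then obtain t where t: "(int m - 1) * x = 2 * int m * t" by (auto elim: dvdE)
      have "x = (int m - 1) * ((int m - 1) * x) - int m * (int m - 2) * x" by (simp add: algebra_simps)
      also have "\<dots> = 2 * int m * ((int m - 1) * t - (int h - 1) * x)" unfolding t using h by (simp add: algebra_simps)
      finally have "x = 2 * int m * ((int m - 1) * t - (int h - 1) * x)" .
      then have "2 * int m dvd x" by (rule dvdI)
      then show "h0 dvd x" using True unfolding h0_def by simp
    next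
      assume "h0 dvd x"
      then show "(2 * int m) dvd ((int m - 1) * x)" using True unfolding h0_def by simp
    qed
  next
    case False
    then obtain h where h: "m = 2 * h + 1" using oddE by blast
    show ?thesis
    proof
      assume "(2 * int m) dvd ((int m - 1) * x)"
      then obtain t where t: "(int m - 1) * x = 2 * int m * t" by (auto elim: dvdE)
      have "x = int m * x - (int m - 1) * x" by (simp add: algebra_simps)
      also have "\<dots> = int m * (x - 2 * t)" unfolding t by (simp add: algebra_simps)
      finally have "int m dvd x" by (rule dvdI)
      then show "h0 dvd x" using False unfolding h0_def by simp
    next
      assume "h0 dvd x"
      then obtain t where t: "x = int m * t" using False unfolding h0_def by (auto elim: dvdE)
      have "(int m - 1) * x = 2 * int m * (int h * t)" unfolding t using h by (simp add: algebra_simps)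
      then show "(2 * int m) dvd ((int m - 1) * x)" by simp
    qed
  qed
  finally show ?thesis .
qed

end


context sd begin

lemma mod_lin: "(a mod nn + c * (b mod nn)) mod nn = (a + c * b) mod nn"
proof -
  have "(a mod nn + c * (b mod nn)) mod nn = (a + c * (b mod nn)) mod nn" by (rule mod_add_left_eq)
  also have "\<dots> = (a + (c * (b mod nn)) mod nn) mod nn" by (rule mod_add_right_eq[symmetric])
  also have "(c * (b mod nn)) mod nn = (c * b) mod nn" by (rule mod_mult_right_eq)
  also have "(a + (c * b) mod nn) mod nn = (a + c * b) mod nn" by (rule mod_add_right_eq)
  finally show ?thesis .
qed

lemma mod_in: "0 \<le> a \<Longrightarrow> a < nn \<Longrightarrow> a mod nn = a" by simp

lemma cf_rot_rot: assumes "0 \<le> k" "k < nn" "0 \<le> j" "j < nn"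
  shows "(k, False) \<otimes>\<^bsub>G\<^esub> (j, False) \<otimes>\<^bsub>G\<^esub> inv\<^bsub>G\<^esub> (k, False) = (j, False)"
proof -
  have "(k, False) \<otimes>\<^bsub>G\<^esub> (j, False) \<otimes>\<^bsub>G\<^esub> inv\<^bsub>G\<^esub> (k, False) = (((k + j) mod nn + (- k) mod nn) mod nn, False)"
    using assms by (simp add: mult inv_rot)
  also have "((k + j) mod nn + (- k) mod nn) mod nn = (k + j + - k) mod nn" by (rule mod_add_eq)
  finally show ?thesis using assms by simp
qed

lemma cf_ref_rot: assumes "0 \<le> k" "k < nn" "0 \<le> j" "j < nn"
  shows "(k, True) \<otimes>\<^bsub>G\<^esub> (j, False) \<otimes>\<^bsub>G\<^esub> inv\<^bsub>G\<^esub> (k, True) = ((rr * j) mod nn, False)"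
proof -
  have "(k, True) \<otimes>\<^bsub>G\<^esub> (j, False) \<otimes>\<^bsub>G\<^esub> inv\<^bsub>G\<^esub> (k, True) = (((k + rr * j) mod nn + rr * ((- rr * k) mod nn)) mod nn, False)"
    using assms by (simp add: mult inv_ref)
  also have "((k + rr * j) mod nn + rr * ((- rr * k) mod nn)) mod nn = (k + rr * j + rr * (- rr * k)) mod nn" by (rule mod_lin)
  also have "\<dots> = (rr * j) mod nn" unfolding mod_eq_iff
  proof -
    have "k + rr * j + rr * (- rr * k) - rr * j = nn * (- (int m - 1) * k)" using rr_sq by (simp add: algebra_simps)
    then show "nn dvd k + rr * j + rr * (- rr * k) - rr * j" by simp
  qed
  finally show ?thesis .
qed

lemma cf_rot_ref: assumes "0 \<le> k" "k < nn" "0 \<le> i" "i < nn"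
  shows "(k, False) \<otimes>\<^bsub>G\<^esub> (i, True) \<otimes>\<^bsub>G\<^esub> inv\<^bsub>G\<^esub> (k, False) = ((i - (2 * int m - 2) * k) mod nn, True)"
proof -
  have "(k, False) \<otimes>\<^bsub>G\<^esub> (i, True) \<otimes>\<^bsub>G\<^esub> inv\<^bsub>G\<^esub> (k, False) = (((k + i) mod nn + rr * ((- k) mod nn)) mod nn, True)"
    using assms by (simp add: mult inv_rot)
  also have "((k + i) mod nn + rr * ((- k) mod nn)) mod nn = (k + i + rr * (- k)) mod nn" by (rule mod_lin)
  also have "k + i + rr * (- k) = i - (2 * int m - 2) * k" by (simp add: algebra_simps)
  finally show ?thesis .
qed

lemma cf_ref_ref: assumes "0 \<le> k" "k < nn" "0 \<le> i" "i < nn"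
  shows "(k, True) \<otimes>\<^bsub>G\<^esub> (i, True) \<otimes>\<^bsub>G\<^esub> inv\<^bsub>G\<^esub> (k, True) = ((rr * i - (2 * int m - 2) * k) mod nn, True)"
proof -
  have "(k, True) \<otimes>\<^bsub>G\<^esub> (i, True) \<otimes>\<^bsub>G\<^esub> inv\<^bsub>G\<^esub> (k, True) = (((k + rr * i) mod nn + (- rr * k) mod nn) mod nn, True)"
    using assms by (simp add: mult inv_ref)
  also have "((k + rr * i) mod nn + (- rr * k) mod nn) mod nn = (k + rr * i + - rr * k) mod nn" by (rule mod_add_eq)
  also have "k + rr * i + - rr * k = rr * i - (2 * int m - 2) * k" by (simp add: algebra_simps)
  finally show ?thesis .
qed

lemma comm_rot_ref: assumes "0 \<le> k" "k < nn" "0 \<le> j" "j < nn"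
  shows "(j, False) \<otimes>\<^bsub>G\<^esub> (k, True) = (k, True) \<otimes>\<^bsub>G\<^esub> (j, False) \<longleftrightarrow> h0 dvd j"
proof -
  have "(j, False) \<otimes>\<^bsub>G\<^esub> (k, True) = (k, True) \<otimes>\<^bsub>G\<^esub> (j, False) \<longleftrightarrow> (j + k) mod nn = (k + rr * j) mod nn"
    by (simp add: mult)
  also have "\<dots> \<longleftrightarrow> nn dvd (j + k - (k + rr * j))" by (rule mod_eq_iff)
  also have "j + k - (k + rr * j) = - ((2 * int m - 2) * j)" by (simp add: algebra_simps)
  also have "nn dvd - ((2 * int m - 2) * j) \<longleftrightarrow> h0 dvd j" using key by simp
  finally show ?thesis .
qed

lemma comm_ref_ref:
  shows "(i, True) \<otimes>\<^bsub>G\<^esub> (k, True) = (k, True) \<otimes>\<^bsub>G\<^esub> (i, True) \<longleftrightarrow> h0 dvd (k - i)"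
proof -
  have "(i, True) \<otimes>\<^bsub>G\<^esub> (k, True) = (k, True) \<otimes>\<^bsub>G\<^esub> (i, True) \<longleftrightarrow> (i + rr * k) mod nn = (k + rr * i) mod nn"
    by (simp add: mult)
  also have "\<dots> \<longleftrightarrow> nn dvd (i + rr * k - (k + rr * i))" by (rule mod_eq_iff)
  also have "i + rr * k - (k + rr * i) = (2 * int m - 2) * (k - i)" by (simp add: algebra_simps)
  also have "nn dvd ((2 * int m - 2) * (k - i)) \<longleftrightarrow> h0 dvd (k - i)" by (rule key)
  finally show ?thesis .
qed

lemma comm_rot_rot: "(i, False) \<otimes>\<^bsub>G\<^esub> (k, False) = (k, False) \<otimes>\<^bsub>G\<^esub> (i, False)"
  by (simp add: mult add.commute)

lemma h0_ge2: "h0 \<ge> 2" using m2 unfolding h0_def by auto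

lemma not_h0_dvd1: "\<not> h0 dvd 1"
proof
  assume "h0 dvd 1"
  then have "h0 \<le> 1" by (rule zdvd_imp_le) simp
  with h0_ge2 show False by simp
qed

lemma center: "grp_center G = {(j, False) | j. 0 \<le> j \<and> j < nn \<and> h0 dvd j}"
proof (rule Set.set_eqI)
  fix z :: "int \<times> bool"
  obtain a b where z: "z = (a, b)" by (cases z)
  show "z \<in> grp_center G \<longleftrightarrow> z \<in> {(j, False) | j. 0 \<le> j \<and> j < nn \<and> h0 dvd j}"
  proof
    assume zc: "z \<in> grp_center G"
    then have a: "0 \<le> a" "a < nn" using z by (auto simp: grp_center_def carr)
    have one_in: "(1, False) \<in> carrier G" "(0, True) \<in> carrier G" using m2 by (auto simp: carr)
    show "z \<in> {(j, False) | j. 0 \<le> j \<and> j < nn \<and> h0 dvd j}"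
    proof (cases b)
      case True
      have "(a, True) \<otimes>\<^bsub>G\<^esub> (1, False) = (1, False) \<otimes>\<^bsub>G\<^esub> (a, True)"
        using zc z True one_in unfolding grp_center_def by auto
      then have "h0 dvd 1" using comm_rot_ref[of a 1] a m2 by simp
      then show ?thesis using not_h0_dvd1 by simp
    next
      case False
      have "(a, False) \<otimes>\<^bsub>G\<^esub> (0, True) = (0, True) \<otimes>\<^bsub>G\<^esub> (a, False)"
        using zc z False one_in unfolding grp_center_def by auto
      then have "h0 dvd a" using comm_rot_ref[of 0 a] a m2 by simp
      then show ?thesis using z False a by simp
    qed
  next
    assume "z \<in> {(j, False) | j. 0 \<le> j \<and> j < nn \<and> h0 dvd j}"
    then have zz: "b = False" "0 \<le> a" "a < nn" "h0 dvd a" using z by auto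
    have "\<forall>g\<in>carrier G. z \<otimes>\<^bsub>G\<^esub> g = g \<otimes>\<^bsub>G\<^esub> z"
    proof
      fix g assume g: "g \<in> carrier G"
      obtain k c where kc: "g = (k, c)" by (cases g)
      have k: "0 \<le> k" "k < nn" using g kc by (auto simp: carr)
      show "z \<otimes>\<^bsub>G\<^esub> g = g \<otimes>\<^bsub>G\<^esub> z"
      proof (cases c)
        case True then show ?thesis using comm_rot_ref[OF k zz(2,3)] zz z kc by simp
      next
        case False then show ?thesis using comm_rot_rot z zz kc by simp
      qed
    qed
    then show "z \<in> grp_center G" using z zz by (auto simp: grp_center_def carr)
  qed
qed

end


context sd begin

definition Rf :: "int \<Rightarrow> (int \<times> bool) set" where
  "Rf i = {(k, True) | k. 0 \<le> k \<and> k < nn \<and> k mod gg = i mod gg}"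

lemma gg_dvd_nn: "gg dvd nn"
  unfolding gg_def by (auto intro: dvdI[where k = "2 * int m"] dvdI[where k = "int m"])

lemma gg_dvd_c: "gg dvd (2 * int m - 2)"
proof (cases "even m")
  case True
  then show ?thesis unfolding gg_def by (auto intro: dvdI[where k = "int m - 1"] simp: algebra_simps)
next
  case False
  then obtain h where h: "m = 2 * h + 1" using oddE by blast
  show ?thesis using False h unfolding gg_def by (auto intro: dvdI[where k = "int h"] simp: algebra_simps)
qed

lemma gg_pos: "gg > 0" unfolding gg_def by simp

lemma mod_c: "(i - c * (kk mod nn)) mod nn = (i - c * kk) mod nn"
proof -
  have "(i mod nn + (- c) * (kk mod nn)) mod nn = (i + (- c) * kk) mod nn" by (rule mod_lin)
  moreover have "(i - c * (kk mod nn)) mod nn = (i mod nn - c * (kk mod nn)) mod nn" by (rule mod_diff_left_eq[symmetric])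
  moreover have "i mod nn - c * (kk mod nn) = i mod nn + (- c) * (kk mod nn)" by simp
  moreover have "i - c * kk = i + (- c) * kk" by simp
  ultimately show ?thesis by metis
qed

lemma wit: assumes "k' mod gg = i mod gg" shows "\<exists>kk. nn dvd (i - (2 * int m - 2) * kk - k')"
proof (cases "even m")
  case True
  then obtain h where h: "m = 2 * h" by (auto elim: evenE)
  have "gg dvd (i - k')" using assms[symmetric] by (simp add: mod_eq_dvd_iff)
  then have "2 dvd (i - k')" using True unfolding gg_def by simp
  then obtain d where d: "i - k' = 2 * d" unfolding dvd_def by blast
  have "i - (2 * int m - 2) * ((int m - 1) * d) - k' = nn * (- d * (int h - 1))"
  proof -
    have "i - (2 * int m - 2) * ((int m - 1) * d) - k' = (i - k') - (2 * int m - 2) * ((int m - 1) * d)" by simp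
    also have "\<dots> = 2 * d - (2 * int m - 2) * ((int m - 1) * d)" using d by simp
    also have "\<dots> = nn * (- d * (int h - 1))" using h by (simp add: algebra_simps)
    finally show ?thesis .
  qed
  then show ?thesis by (intro exI[of _ "(int m - 1) * d"]) simp
next
  case False
  have "gg dvd (i - k')" using assms[symmetric] by (simp add: mod_eq_dvd_iff)
  then have "4 dvd (i - k')" using False unfolding gg_def by simp
  then obtain d where d: "i - k' = 4 * d" unfolding dvd_def by blast
  have "i - (2 * int m - 2) * (- 2 * d) - k' = nn * d"
  proof -
    have "i - (2 * int m - 2) * (- 2 * d) - k' = (i - k') + (2 * int m - 2) * (2 * d)" by (simp add: algebra_simps)
    also have "\<dots> = nn * d" using d by (simp add: algebra_simps)
    finally show ?thesis .
  qed
  then show ?thesis by (intro exI[of _ "- 2 * d"]) simp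
qed

lemma conj_rot: assumes "0 \<le> j" "j < nn"
  shows "conj_class G (j, False) = {(j, False), ((rr * j) mod nn, False)}"
proof (rule Set.set_eqI)
  fix y :: "int \<times> bool"
  show "y \<in> conj_class G (j, False) \<longleftrightarrow> y \<in> {(j, False), ((rr * j) mod nn, False)}"
  proof
    assume "y \<in> conj_class G (j, False)"
    then obtain g where g: "g \<in> carrier G" "y = g \<otimes>\<^bsub>G\<^esub> (j, False) \<otimes>\<^bsub>G\<^esub> inv\<^bsub>G\<^esub> g"
      unfolding conj_class_def by blast
    obtain k c where kc: "g = (k, c)" by (cases g)
    have k: "0 \<le> k" "k < nn" using g kc by (auto simp: carr)
    show "y \<in> {(j, False), ((rr * j) mod nn, False)}"
      using g kc cf_rot_rot[OF k assms] cf_ref_rot[OF k assms] by (cases c) auto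
  next
    assume y: "y \<in> {(j, False), ((rr * j) mod nn, False)}"
    have c0: "(0, False) \<in> carrier G" "(0, True) \<in> carrier G" using nn_pos by (auto simp: carr)
    have "(j, False) = (0, False) \<otimes>\<^bsub>G\<^esub> (j, False) \<otimes>\<^bsub>G\<^esub> inv\<^bsub>G\<^esub> (0, False)"
      using cf_rot_rot[of 0 j] assms nn_pos by simp
    moreover have "((rr * j) mod nn, False) = (0, True) \<otimes>\<^bsub>G\<^esub> (j, False) \<otimes>\<^bsub>G\<^esub> inv\<^bsub>G\<^esub> (0, True)"
      using cf_ref_rot[of 0 j] assms nn_pos by simp
    ultimately show "y \<in> conj_class G (j, False)" using y c0 unfolding conj_class_def by blast
  qed
qed

lemma conj_ref: assumes "0 \<le> i" "i < nn"
  shows "conj_class G (i, True) = Rf i"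
proof (rule Set.set_eqI)
  fix y :: "int \<times> bool"
  show "y \<in> conj_class G (i, True) \<longleftrightarrow> y \<in> Rf i"
  proof
    assume "y \<in> conj_class G (i, True)"
    then obtain g where g: "g \<in> carrier G" "y = g \<otimes>\<^bsub>G\<^esub> (i, True) \<otimes>\<^bsub>G\<^esub> inv\<^bsub>G\<^esub> g"
      unfolding conj_class_def by blast
    obtain k c where kc: "g = (k, c)" by (cases g)
    have k: "0 \<le> k" "k < nn" using g kc by (auto simp: carr)
    have A: "((i - (2 * int m - 2) * k) mod nn) mod gg = i mod gg"
    proof -
      have "((i - (2 * int m - 2) * k) mod nn) mod gg = (i - (2 * int m - 2) * k) mod gg"
        using gg_dvd_nn by (rule mod_mod_cancel)
      also have "\<dots> = i mod gg" unfolding mod_eq_dvd_iff using gg_dvd_c by simp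
      finally show ?thesis .
    qed
    have B: "((rr * i - (2 * int m - 2) * k) mod nn) mod gg = i mod gg"
    proof -
      have "((rr * i - (2 * int m - 2) * k) mod nn) mod gg = (rr * i - (2 * int m - 2) * k) mod gg"
        using gg_dvd_nn by (rule mod_mod_cancel)
      also have "\<dots> = i mod gg" unfolding mod_eq_dvd_iff
      proof -
        have "rr * i - (2 * int m - 2) * k - i = (2 * int m - 2) * (i - k)" by (simp add: algebra_simps)
        then show "gg dvd rr * i - (2 * int m - 2) * k - i" using gg_dvd_c by simp
      qed
      finally show ?thesis .
    qed
    show "y \<in> Rf i"
    proof (cases c)
      case True
      then have "y = ((rr * i - (2 * int m - 2) * k) mod nn, True)" using g kc cf_ref_ref[OF k assms] by simp
      then show ?thesis using B nn_pos unfolding Rf_def by auto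
    next
      case False
      then have "y = ((i - (2 * int m - 2) * k) mod nn, True)" using g kc cf_rot_ref[OF k assms] by simp
      then show ?thesis using A nn_pos unfolding Rf_def by auto
    qed
  next
    assume "y \<in> Rf i"
    then obtain k' where y: "y = (k', True)" "0 \<le> k'" "k' < nn" "k' mod gg = i mod gg" unfolding Rf_def by blast
    obtain kk where kk: "nn dvd (i - (2 * int m - 2) * kk - k')" using wit[OF y(4)] by blast
    have k: "0 \<le> kk mod nn" "kk mod nn < nn" using nn_pos by auto
    have "(i - (2 * int m - 2) * (kk mod nn)) mod nn = (i - (2 * int m - 2) * kk) mod nn" by (rule mod_c)
    also have "\<dots> = k' mod nn" unfolding mod_eq_iff using kk by simp
    also have "\<dots> = k'" using y by simp
    finally have "(kk mod nn, False) \<otimes>\<^bsub>G\<^esub> (i, True) \<otimes>\<^bsub>G\<^esub> inv\<^bsub>G\<^esub> (kk mod nn, False) = y"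
      using cf_rot_ref[OF k assms] y by simp
    moreover have "(kk mod nn, False) \<in> carrier G" using k by (simp add: carr)
    ultimately show "y \<in> conj_class G (i, True)" unfolding conj_class_def by blast
  qed
qed

end


context sd begin

definition "sg j = (rr * j) mod nn"
definition "cl j = {(j, False), (sg j, False)}"
definition "Zr = {j. 0 \<le> j \<and> j < nn \<and> \<not> h0 dvd j}"
definition "VS = Rf ` {0..<gg}"
definition "VT = cl ` Zr"
definition "qq = (if even m then 2 else (4::int))"

lemma h0_dvd_nn: "h0 dvd nn"
  unfolding h0_def by (auto intro: dvdI[where k = 2] dvdI[where k = 4])

lemma nn_eq: "nn = h0 * qq" unfolding h0_def qq_def by auto

lemma sg_range: "0 \<le> sg j" "sg j < nn" using nn_pos by (auto simp: sg_def)

lemma sgsg: assumes "0 \<le> j" "j < nn" shows "sg (sg j) = j"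
proof -
  have "sg (sg j) = (rr * ((rr * j) mod nn)) mod nn" by (simp add: sg_def)
  also have "\<dots> = (rr * (rr * j)) mod nn" by (rule mod_mult_right_eq)
  also have "\<dots> = j mod nn" unfolding mod_eq_iff
  proof -
    have "rr * (rr * j) - j = nn * ((int m - 1) * j)" using rr_sq by (simp add: algebra_simps)
    then show "nn dvd rr * (rr * j) - j" by simp
  qed
  finally show ?thesis using assms by simp
qed

lemma sg_neq: assumes "j \<in> Zr" shows "sg j \<noteq> j"
proof
  assume "sg j = j"
  then have "(rr * j) mod nn = j mod nn" using assms by (simp add: sg_def Zr_def)
  then have "nn dvd (rr * j - j)" by (simp add: mod_eq_iff)
  moreover have "rr * j - j = (2 * int m - 2) * j" by (simp add: algebra_simps)
  ultimately have "h0 dvd j" using key by simp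
  then show False using assms by (simp add: Zr_def)
qed

lemma sg_Zr: assumes "j \<in> Zr" shows "sg j \<in> Zr"
proof -
  have "\<not> h0 dvd sg j"
  proof
    assume a: "h0 dvd sg j"
    have "rr * j = nn * ((rr * j) div nn) + sg j" by (simp add: sg_def)
    then have "h0 dvd rr * j" using a h0_dvd_nn by (metis dvd_add dvd_mult2)
    then have "h0 dvd rr * (rr * j)" by simp
    moreover have "rr * (rr * j) = j + nn * ((int m - 1) * j)" using rr_sq by (simp add: algebra_simps)
    ultimately have "h0 dvd j + nn * ((int m - 1) * j)" by simp
    moreover have "h0 dvd nn * ((int m - 1) * j)" using h0_dvd_nn by simp
    ultimately have "h0 dvd j" using dvd_add_left_iff by blast
    then show False using assms by (simp add: Zr_def)
  qed
  then show ?thesis using sg_range by (simp add: Zr_def)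
qed

lemma cl_sg: assumes "j \<in> Zr" shows "cl (sg j) = cl j"
  using sgsg[of j] assms by (auto simp: cl_def Zr_def)

lemma card_cl: assumes "j \<in> Zr" shows "card (cl j) = 2"
  using sg_neq[OF assms] by (auto simp: cl_def)

lemma cl_disj: assumes "j \<in> Zr" "j' \<in> Zr" "cl j \<noteq> cl j'" shows "cl j \<inter> cl j' = {}"
proof (rule ccontr)
  assume "cl j \<inter> cl j' \<noteq> {}"
  then obtain a where a: "a \<in> cl j" "a \<in> cl j'" by blast
  have "cl j = cl j'"
  proof -
    consider "(j, False) = (j', False)" | "(j, False) = (sg j', False)" | "(sg j, False) = (j', False)"
      | "(sg j, False) = (sg j', False)" using a by (auto simp: cl_def)
    then show ?thesis
    proof cases
      case 1 then show ?thesis by simp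
    next
      case 2 then have "j = sg j'" by simp
      then show ?thesis using cl_sg[OF assms(2)] by simp
    next
      case 3 then have "j' = sg j" by simp
      then show ?thesis using cl_sg[OF assms(1)] by simp
    next
      case 4 then have "sg (sg j) = sg (sg j')" by simp
      then have "j = j'" using sgsg assms by (simp add: Zr_def)
      then show ?thesis by simp
    qed
  qed
  with assms(3) show False by simp
qed

lemma UVT: "\<Union> VT = (\<lambda>j. (j, False)) ` Zr"
  unfolding VT_def cl_def using sg_Zr by auto

lemma fin_Zr: "finite Zr" unfolding Zr_def by (rule finite_subset[of _ "{0..<nn}"]) auto

lemma card_Zr: "card Zr = nat nn - nat qq"
proof -
  define Zc where "Zc = {j. 0 \<le> j \<and> j < nn \<and> h0 dvd j}"
  have Zr: "Zr = {0..<nn} - Zc" unfolding Zr_def Zc_def by auto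
  have Zc: "Zc = (\<lambda>t. h0 * t) ` {0..<qq}"
  proof (rule Set.set_eqI)
    fix j
    show "j \<in> Zc \<longleftrightarrow> j \<in> (\<lambda>t. h0 * t) ` {0..<qq}"
    proof
      assume "j \<in> Zc"
      then obtain t where t: "j = h0 * t" "0 \<le> h0 * t" "h0 * t < h0 * qq" unfolding Zc_def using nn_eq by (auto elim!: dvdE)
      have "0 \<le> t" using t(2) h0_ge2 by (simp add: zero_le_mult_iff)
      moreover have "t < qq" using t(3) h0_ge2 by simp
      ultimately show "j \<in> (\<lambda>t. h0 * t) ` {0..<qq}" using t(1) by auto
    next
      assume "j \<in> (\<lambda>t. h0 * t) ` {0..<qq}"
      then obtain t where t1: "j = h0 * t" and t2: "t \<in> {0..<qq}" by (rule imageE)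
      then have t: "j = h0 * t" "0 \<le> t" "t < qq" by auto
      have "h0 * t < h0 * qq" using t h0_ge2 by simp
      then show "j \<in> Zc" using t h0_ge2 nn_eq unfolding Zc_def by auto
    qed
  qed
  have inj: "inj_on (\<lambda>t. h0 * t) {0..<qq}" using h0_ge2 by (auto simp: inj_on_def)
  have cZc: "card Zc = nat qq" unfolding Zc using card_image[OF inj] by simp
  have sub: "Zc \<subseteq> {0..<nn}" unfolding Zc_def by auto
  have "card Zr = card {0..<nn} - card Zc" unfolding Zr by (rule card_Diff_subset) (use sub in \<open>auto intro: finite_subset\<close>)
  then show ?thesis using cZc by simp
qed

lemma card_VT2: "2 * card VT = nat nn - nat qq"
proof -
  have "2 * card VT = card (\<Union> VT)"
  proof (rule card_partition)
    show "finite VT" unfolding VT_def using fin_Zr by simp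
    show "finite (\<Union> VT)" unfolding UVT using fin_Zr by simp
    show "\<And>c. c \<in> VT \<Longrightarrow> card c = 2" unfolding VT_def using card_cl by auto
    show "\<And>c1 c2. c1 \<in> VT \<Longrightarrow> c2 \<in> VT \<Longrightarrow> c1 \<noteq> c2 \<Longrightarrow> c1 \<inter> c2 = {}"
      unfolding VT_def using cl_disj by auto
  qed
  also have "\<dots> = card Zr" unfolding UVT by (rule card_image) (auto simp: inj_on_def)
  finally show ?thesis using card_Zr by simp
qed

lemma Rf_mod: "Rf (i mod gg) = Rf i" unfolding Rf_def by simp

lemma gg_le_nn: "gg \<le> nn" using m2 unfolding gg_def by auto

lemma Rf_self: "0 \<le> c \<Longrightarrow> c < nn \<Longrightarrow> (c, True) \<in> Rf c" unfolding Rf_def by auto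

lemma card_VS: "card VS = nat gg"
proof -
  have "inj_on Rf {0..<gg}"
  proof (rule inj_onI)
    fix c c' assume c: "c \<in> {0..<gg}" "c' \<in> {0..<gg}" "Rf c = Rf c'"
    then have "(c, True) \<in> Rf c'" using Rf_self[of c] gg_le_nn by auto
    then have "c mod gg = c' mod gg" unfolding Rf_def by auto
    then show "c = c'" using c by simp
  qed
  then show ?thesis unfolding VS_def by (simp add: card_image)
qed

lemma V_eq: "nccc_vertices G = VS \<union> VT"
proof -
  have CC: "carrier G - grp_center G = ((\<lambda>i. (i, True)) ` {0..<nn}) \<union> ((\<lambda>j. (j, False)) ` Zr)"
    unfolding center carr Zr_def by auto
  have A: "conj_class G ` ((\<lambda>i. (i, True)) ` {0..<nn}) = VS"
  proof -
    have "conj_class G ` ((\<lambda>i. (i, True)) ` {0..<nn}) = (\<lambda>i. conj_class G (i, True)) ` {0..<nn}"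
      by (simp add: image_image)
    also have "\<dots> = Rf ` {0..<nn}" by (rule image_cong) (auto simp: conj_ref)
    also have "\<dots> = Rf ` {0..<gg}"
    proof
      show "Rf ` {0..<nn} \<subseteq> Rf ` {0..<gg}"
      proof
        fix X assume "X \<in> Rf ` {0..<nn}"
        then obtain i where "X = Rf i" by auto
        then have "X = Rf (i mod gg)" by (simp add: Rf_mod)
        moreover have "i mod gg \<in> {0..<gg}" using gg_pos by simp
        ultimately show "X \<in> Rf ` {0..<gg}" by blast
      qed
      show "Rf ` {0..<gg} \<subseteq> Rf ` {0..<nn}" using gg_le_nn by auto
    qed
    finally show ?thesis unfolding VS_def .
  qed
  have B: "conj_class G ` ((\<lambda>j. (j, False)) ` Zr) = VT"
    unfolding VT_def using conj_rot by (auto simp: image_iff cl_def sg_def Zr_def)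
  show ?thesis unfolding nccc_vertices_def CC image_Un A B ..
qed

lemma VS_elem: "X \<in> VS \<Longrightarrow> \<exists>c. 0 \<le> c \<and> c < nn \<and> X = Rf c"
  unfolding VS_def using gg_le_nn by force

lemma VT_elem: "X \<in> VT \<Longrightarrow> \<exists>j. j \<in> Zr \<and> X = cl j"
  unfolding VT_def by auto

lemma disj: "VS \<inter> VT = {}"
proof (rule ccontr)
  assume "VS \<inter> VT \<noteq> {}"
  then obtain X where X: "X \<in> VS" "X \<in> VT" by blast
  obtain c where c: "0 \<le> c" "c < nn" "X = Rf c" using VS_elem[OF X(1)] by blast
  obtain j where j: "j \<in> Zr" "X = cl j" using VT_elem[OF X(2)] by blast
  have "(c, True) \<in> cl j" using Rf_self[OF c(1,2)] c j by simp
  then show False by (simp add: cl_def)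
qed

lemma fin_V: "finite (nccc_vertices G)"
  unfolding V_eq VS_def VT_def using fin_Zr by simp

end


context sd begin

lemma VT_mem: "X \<in> VT \<Longrightarrow> x \<in> X \<Longrightarrow> \<exists>a. x = (a, False) \<and> a \<in> Zr"
  using UVT by blast

lemma VT_some: "X \<in> VT \<Longrightarrow> \<exists>a. (a, False) \<in> X"
  unfolding VT_def cl_def by auto

lemma Rf_mem: "x \<in> Rf c \<Longrightarrow> \<exists>k. x = (k, True) \<and> 0 \<le> k \<and> k < nn \<and> k mod gg = c mod gg"
  unfolding Rf_def by auto

lemma adj_VT_VT: "X \<in> VT \<Longrightarrow> Y \<in> VT \<Longrightarrow> \<not> nccc_adj G X Y"
proof -
  assume X: "X \<in> VT" and Y: "Y \<in> VT"
  obtain a where a: "(a, False) \<in> X" using VT_some[OF X] by blast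
  obtain b where b: "(b, False) \<in> Y" using VT_some[OF Y] by blast
  show ?thesis unfolding nccc_adj_def using a b comm_rot_rot by blast
qed

lemma adj_VT_VS: assumes X: "X \<in> VT" and Y: "Y \<in> VS" shows "nccc_adj G X Y" "nccc_adj G Y X"
proof -
  have ne: "X \<noteq> Y" using disj X Y by blast
  obtain c where c: "0 \<le> c" "c < nn" "Y = Rf c" using VS_elem[OF Y] by blast
  have nc: "x' \<otimes>\<^bsub>G\<^esub> y' \<noteq> y' \<otimes>\<^bsub>G\<^esub> x'" if xX: "x' \<in> X" and yY: "y' \<in> Y" for x' y'
  proof -
    obtain a where a: "x' = (a, False)" "a \<in> Zr" using VT_mem[OF X xX] by blast
    obtain k where k: "y' = (k, True)" "0 \<le> k" "k < nn" using Rf_mem[of y' c] yY c by blast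
    have "0 \<le> a" "a < nn" "\<not> h0 dvd a" using a(2) by (auto simp: Zr_def)
    then show ?thesis using comm_rot_ref[of k a] a k by auto
  qed
  show "nccc_adj G X Y" unfolding nccc_adj_def using ne nc by blast
  show "nccc_adj G Y X" unfolding nccc_adj_def using ne nc by metis
qed

lemma Rf_eq: "c mod gg = c' mod gg \<Longrightarrow> Rf c = Rf c'"
  unfolding Rf_def by simp

lemma adj_VS_even: assumes "even m" "X \<in> VS" "Y \<in> VS" "X \<noteq> Y" shows "nccc_adj G X Y"
proof -
  obtain c where c: "X = Rf c" using VS_elem[OF assms(2)] by blast
  obtain c' where c': "Y = Rf c'" using VS_elem[OF assms(3)] by blast
  have "x' \<otimes>\<^bsub>G\<^esub> y' \<noteq> y' \<otimes>\<^bsub>G\<^esub> x'" if xX: "x' \<in> X" and yY: "y' \<in> Y" for x' y'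
  proof
    assume eq: "x' \<otimes>\<^bsub>G\<^esub> y' = y' \<otimes>\<^bsub>G\<^esub> x'"
    obtain i where i: "x' = (i, True)" "i mod gg = c mod gg" using Rf_mem[of x' c] xX c by blast
    obtain k where k: "y' = (k, True)" "k mod gg = c' mod gg" using Rf_mem[of y' c'] yY c' by blast
    have h0e: "h0 = 2 * int m" using assms(1) unfolding h0_def by simp
    have "h0 dvd (k - i)" using eq i k comm_ref_ref by simp
    then have "2 * int m dvd (k - i)" unfolding h0e .
    then have "2 dvd (k - i)" by (rule dvd_mult_left)
    then have "k mod 2 = i mod 2" unfolding mod_eq_dvd_iff .
    have gg2: "gg = 2" using assms(1) unfolding gg_def by simp
    have "c mod gg = i mod gg" using i(2) by simp
    also have "i mod gg = k mod gg" using \<open>k mod 2 = i mod 2\<close> gg2 by simp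
    also have "k mod gg = c' mod gg" using k(2) .
    finally have cc: "c mod gg = c' mod gg" .
    have "X = Y" using Rf_eq[OF cc] c c' by simp
    then show False using assms(4) by simp
  qed
  then show ?thesis unfolding nccc_adj_def using assms(4) by blast
qed

lemma adj_VS_odd: assumes "odd m" "X \<in> VS" "Y \<in> VS" shows "\<not> nccc_adj G X Y"
proof -
  obtain h where h: "m = 2 * h + 1" using assms(1) oddE by blast
  have gg4: "gg = 4" "h0 = int m" using assms(1) unfolding gg_def h0_def by auto
  obtain c where c: "X = Rf c" using VS_elem[OF assms(2)] by blast
  obtain c' where c': "Y = Rf c'" using VS_elem[OF assms(3)] by blast
  define c0 where "c0 = c mod 4"
  define t where "t = ((c' - c0) * int m) mod 4"
  define u where "u = ((c' - c0) * int m) div 4"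
  define k where "k = (c0 + t * int m) mod nn"
  define w where "w = (c0 + t * int m) div nn"
  have c0r: "0 \<le> c0" "c0 < nn" using m2 unfolding c0_def by auto
  have x: "(c0, True) \<in> X" using c c0r gg4 unfolding Rf_def c0_def by auto
  have kr: "0 \<le> k" "k < nn" using nn_pos unfolding k_def by auto
  have "k mod 4 = (c0 + t * int m) mod 4" unfolding k_def
    using gg_dvd_nn gg4 by (simp add: mod_mod_cancel)
  also have "\<dots> = c' mod 4" unfolding mod_eq_dvd_iff
  proof -
    have tu: "(c' - c0) * int m = 4 * u + t" unfolding t_def u_def by simp
    have "c0 + t * int m - c' = (c' - c0) * int m * int m - (c' - c0) - 4 * u * int m"
      using tu by (simp add: algebra_simps)
    also have "\<dots> = 4 * ((c' - c0) * (int h * int h + int h) - u * int m)"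
      using h by (simp add: algebra_simps)
    finally show "4 dvd c0 + t * int m - c'" by simp
  qed
  finally have y: "(k, True) \<in> Y" using c' kr gg4 unfolding Rf_def by auto
  have "k - c0 = int m * (t - 4 * w)"
  proof -
    have "c0 + t * int m = nn * w + k" unfolding k_def w_def by simp
    then show ?thesis by (simp add: algebra_simps)
  qed
  then have "h0 dvd (k - c0)" using gg4 by simp
  then have "(c0, True) \<otimes>\<^bsub>G\<^esub> (k, True) = (k, True) \<otimes>\<^bsub>G\<^esub> (c0, True)" using comm_ref_ref by simp
  then show ?thesis unfolding nccc_adj_def using x y by blast
qed

lemma adj_char:
  assumes "X \<in> VS \<union> VT" "Y \<in> VS \<union> VT"
  shows "nccc_adj G X Y \<longleftrightarrow> X \<noteq> Y \<and>
     (if X \<in> VS \<and> Y \<in> VS then even m else if X \<notin> VS \<and> Y \<notin> VS then False else True)"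
proof (cases "X \<in> VS")
  case XS: True
  show ?thesis
  proof (cases "Y \<in> VS")
    case True
    show ?thesis
    proof (cases "even m")
      case True then show ?thesis using adj_VS_even XS \<open>Y \<in> VS\<close> by (auto simp: nccc_adj_def)
    next
      case False then show ?thesis using adj_VS_odd XS \<open>Y \<in> VS\<close> by auto
    qed
  next
    case False
    then have "Y \<in> VT" using assms by auto
    then show ?thesis using adj_VT_VS(2) XS False by (auto simp: nccc_adj_def)
  qed
next
  case XT: False
  then have X: "X \<in> VT" using assms by auto
  show ?thesis
  proof (cases "Y \<in> VS")
    case True
    then show ?thesis using adj_VT_VS(1)[OF X True] XT by (auto simp: nccc_adj_def)
  next
    case False
    then have "Y \<in> VT" using assms by auto
    then show ?thesis using adj_VT_VT[OF X] XT False by auto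
  qed
qed

end


context sgraph begin

lemma ex_s0t0: assumes "VS \<noteq> {}" "V - VS \<noteq> {}" shows "\<exists>s0 t0. s0 \<in> SI \<and> t0 < N \<and> t0 \<notin> SI"
proof -
  obtain X where X: "X \<in> VS" using assms(1) by blast
  obtain Y where Y: "Y \<in> V" "Y \<notin> VS" using assms(2) by blast
  have "X \<in> f ` {..<N}" using X VS bij unfolding bij_betw_def by auto
  then obtain i where i: "i < N" "f i = X" by auto
  have "Y \<in> f ` {..<N}" using Y bij unfolding bij_betw_def by auto
  then obtain j where j: "j < N" "f j = Y" by auto
  have "i \<in> SI" "j \<notin> SI" using i j X Y by (auto simp: SI_def)
  then show ?thesis using j by blast
qed

lemma bf_spec:
  fixes dS dT al be ga l1 l2 :: real
  assumes ne: "VS \<noteq> {}" "V - VS \<noteq> {}"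
    and q: "real (card (V - VS)) * ga \<noteq> 0" and l: "l1 \<noteq> l2"
    and e1: "l1^2 - ((dS + (real (card VS) - 1) * al) + (dT + (real (card (V - VS)) - 1) * be)) * l1
       + ((dS + (real (card VS) - 1) * al) * (dT + (real (card (V - VS)) - 1) * be)
          - (real (card (V - VS)) * ga) * (real (card VS) * ga)) = 0"
    and e2: "l2^2 - ((dS + (real (card VS) - 1) * al) + (dT + (real (card (V - VS)) - 1) * be)) * l2
       + ((dS + (real (card VS) - 1) * al) * (dT + (real (card (V - VS)) - 1) * be)
          - (real (card (V - VS)) * ga) * (real (card VS) * ga)) = 0"
  shows "spec_mset (mat N N (\<lambda>(i,j). bf SI dS dT al be ga i j)) =
     {#l1, l2#} + replicate_mset (card VS - 1) (dS - al) + replicate_mset (card (V - VS) - 1) (dT - be)"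
proof -
  obtain s0 t0 where st: "s0 \<in> SI" "t0 < N" "t0 \<notin> SI" using ex_s0t0[OF ne] by blast
  have "spec_mset (mat N N (\<lambda>(i,j). bf SI dS dT al be ga i j)) =
     {#l1, l2#} + replicate_mset (card SI - 1) (dS - al) + replicate_mset (card ({..<N} - SI) - 1) (dT - be)"
    by (rule twoblock_spec[where n = N and ?s0.0 = s0 and ?t0.0 = t0 and S = SI])
       (use st SI_sub q l e1 e2 in \<open>simp_all add: cardSI cardTI\<close>)
  then show ?thesis by (simp add: cardSI cardTI)
qed

end

context sd begin

lemma sg_inst: "sgraph (nccc_vertices G) VS (nccc_adj G) (even m) False"
proof
  show "finite (nccc_vertices G)" by (rule fin_V)
  show "VS \<subseteq> nccc_vertices G" unfolding V_eq by blast
  fix X Y assume "X \<in> nccc_vertices G" "Y \<in> nccc_vertices G"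
  then show "nccc_adj G X Y \<longleftrightarrow> X \<noteq> Y \<and>
     (if X \<in> VS \<and> Y \<in> VS then even m else if X \<notin> VS \<and> Y \<notin> VS then False else True)"
    unfolding V_eq by (rule adj_char)
qed

lemma VmVS: "nccc_vertices G - VS = VT" unfolding V_eq using disj by blast

lemma neS: "VS \<noteq> {}" unfolding VS_def using gg_pos by auto

lemma neT: "nccc_vertices G - VS \<noteq> {}"
proof -
  have "1 \<in> Zr" using not_h0_dvd1 m2 unfolding Zr_def by auto
  then show ?thesis unfolding VmVS VT_def by auto
qed

lemma cardS: "card VS = (if even m then 2 else 4)"
  using card_VS unfolding gg_def by auto

lemma cardT: "card (nccc_vertices G - VS) = (if even m then 2 * m - 1 else 2 * m - 2)"
proof -
  have "2 * card VT = nat nn - nat qq" by (rule card_VT2)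
  then show ?thesis unfolding VmVS qq_def using m2 by (auto split: if_splits)
qed

end


lemma quad_root: fixes S b c x :: real
  assumes "S^2 = b^2 - 4*c" "x = (b + S)/2 \<or> x = (b - S)/2"
  shows "x^2 - b*x + c = 0"
proof -
  have A: "((b + S)/2)^2 - b*((b + S)/2) + c = (S^2 - (b^2 - 4*c))/4"
    by (simp add: power2_eq_square field_simps)
  have B: "((b - S)/2)^2 - b*((b - S)/2) + c = (S^2 - (b^2 - 4*c))/4"
    by (simp add: power2_eq_square field_simps)
  from assms(2) show ?thesis
  proof (elim disjE)
    assume x: "x = (b + S)/2"
    show ?thesis by (simp only: x A assms(1)) simp
  next
    assume x: "x = (b - S)/2"
    show ?thesis by (simp only: x B assms(1)) simp
  qed
qed

lemma rep_add: "replicate_mset (a + b) x = replicate_mset a x + replicate_mset b x"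
  by (rule multiset_eqI) simp

context sgraph begin

lemma bf_spec2:
  fixes dS dT al be ga b c S :: real
  assumes ne: "VS \<noteq> {}" "V - VS \<noteq> {}"
    and q: "real (card (V - VS)) * ga \<noteq> 0"
    and pw: "(dS + (real (card VS) - 1) * al) + (dT + (real (card (V - VS)) - 1) * be) = b"
    and pq: "(dS + (real (card VS) - 1) * al) * (dT + (real (card (V - VS)) - 1) * be)
          - (real (card (V - VS)) * ga) * (real (card VS) * ga) = c"
    and S: "S^2 = b^2 - 4*c" "S \<noteq> 0"
  shows "spec_mset (mat N N (\<lambda>(i,j). bf SI dS dT al be ga i j)) =
     {#(b + S)/2, (b - S)/2#} + replicate_mset (card VS - 1) (dS - al) + replicate_mset (card (V - VS) - 1) (dT - be)"
proof (rule bf_spec[OF ne q])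
  show "(b + S) / 2 \<noteq> (b - S) / 2" using S(2) by (simp add: field_simps)
  show "((b + S) / 2)\<^sup>2 - ((dS + (real (card VS) - 1) * al) + (dT + (real (card (V - VS)) - 1) * be)) * ((b + S) / 2) +
    ((dS + (real (card VS) - 1) * al) * (dT + (real (card (V - VS)) - 1) * be) - real (card (V - VS)) * ga * (real (card VS) * ga)) = 0"
    unfolding pw pq by (rule quad_root[OF S(1)]) simp
  show "((b - S) / 2)\<^sup>2 - ((dS + (real (card VS) - 1) * al) + (dT + (real (card (V - VS)) - 1) * be)) * ((b - S) / 2) +
    ((dS + (real (card VS) - 1) * al) * (dT + (real (card (V - VS)) - 1) * be) - real (card (V - VS)) * ga * (real (card VS) * ga)) = 0"
    unfolding pw pq by (rule quad_root[OF S(1)]) simp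
qed

end

context sd begin

interpretation sg: sgraph "nccc_vertices G" VS "nccc_adj G" "even m" False by (rule sg_inst)

lemma even_facts: assumes ev: "even m"
  shows "card VS = 2" "card (nccc_vertices G - VS) = 2 * m - 1" "real (card (nccc_vertices G - VS)) = 2 * real m - 1"
    "real sg.ddS = 2 * real m" "real sg.ddT = 2"
proof -
  show c1: "card VS = 2" using cardS ev by simp
  show c2: "card (nccc_vertices G - VS) = 2 * m - 1" using cardT ev by simp
  show "real (card (nccc_vertices G - VS)) = 2 * real m - 1" using c2 m2 by (simp add: of_nat_diff)
  show "real sg.ddS = 2 * real m" unfolding sg.ddS_def using c1 c2 ev m2 by simp
  show "real sg.ddT = 2" unfolding sg.ddT_def using c1 by simp
qed

lemma even_gspec: assumes ev: "even m"
  shows "gspec (nccc_vertices G) (nccc_adj G) = replicate_mset (2*m - 2) 0 + {# -1,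
          (1 + sqrt (16 * real m - 7)) / 2, (1 - sqrt (16 * real m - 7)) / 2 #}"
proof -
  note ef = even_facts[OF ev]
  have "gspec (nccc_vertices G) (nccc_adj G) = {# (1 + sqrt (16 * real m - 7)) / 2, (1 - sqrt (16 * real m - 7)) / 2 #}
    + replicate_mset (card VS - 1) (0 - (if even m then 1 else 0)) + replicate_mset (card (nccc_vertices G - VS) - 1) (0 - (if False then 1 else 0))"
    unfolding gspec_def sg.adj_mat_eq
  proof (rule sg.bf_spec2[OF neS neT])
    show "real (card (nccc_vertices G - VS)) * 1 \<noteq> 0" using ef m2 by simp
    show "0 + (real (card VS) - 1) * (if even m then 1 else 0) + (0 + (real (card (nccc_vertices G - VS)) - 1) * (if False then 1 else 0)) = 1"
      using ef ev by simp
    show "(0 + (real (card VS) - 1) * (if even m then 1 else 0)) * (0 + (real (card (nccc_vertices G - VS)) - 1) * (if False then 1 else 0))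
       - real (card (nccc_vertices G - VS)) * 1 * (real (card VS) * 1) = - 2 * (2 * real m - 1)"
      using ef ev by simp
    show "(sqrt (16 * real m - 7))^2 = 1^2 - 4 * (- 2 * (2 * real m - 1))" using m2 by simp
    show "sqrt (16 * real m - 7) \<noteq> 0" using m2 by simp
  qed
  also have "\<dots> = replicate_mset (2*m - 2) 0 + {# -1, (1 + sqrt (16 * real m - 7)) / 2, (1 - sqrt (16 * real m - 7)) / 2 #}"
    using ef ev by (simp add: numeral_eq_Suc)
  finally show ?thesis .
qed

lemma card_V: "card (nccc_vertices G) = card VS + card (nccc_vertices G - VS)"
proof -
  have sub: "VS \<subseteq> nccc_vertices G" unfolding V_eq by blast
  have "card (nccc_vertices G - VS) = card (nccc_vertices G) - card VS"
    by (rule card_Diff_subset) (use sub fin_V finite_subset in auto)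
  moreover have "card VS \<le> card (nccc_vertices G)" by (rule card_mono[OF fin_V sub])
  ultimately show ?thesis by simp
qed

lemma even_energy: assumes ev: "even m"
  shows "energy (nccc_vertices G) (nccc_adj G) = 1 + sqrt (16 * real m - 7)"
proof -
  have s: "sqrt (16 * real m - 7) \<ge> 1" using m2 by simp
  show ?thesis unfolding energy_def even_gspec[OF ev] using s by (simp add: field_simps)
qed

lemma even_lspec: assumes ev: "even m"
  shows "lspec (nccc_vertices G) (nccc_adj G) = {#0#} + replicate_mset (2*m - 2) 2 + replicate_mset 2 (2 * real m + 1)"
proof -
  note ef = even_facts[OF ev]
  have "lspec (nccc_vertices G) (nccc_adj G) = {# (2 * real m + 1 + (2 * real m + 1)) / 2, (2 * real m + 1 - (2 * real m + 1)) / 2 #}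
    + replicate_mset (card VS - 1) (real sg.ddS - (if even m then -1 else 0)) + replicate_mset (card (nccc_vertices G - VS) - 1) (real sg.ddT - (if False then -1 else 0))"
    unfolding lspec_def sg.lap_mat_eq
  proof (rule sg.bf_spec2[OF neS neT])
    show "real (card (nccc_vertices G - VS)) * -1 \<noteq> 0" using ef m2 by simp
    show "real sg.ddS + (real (card VS) - 1) * (if even m then -1 else 0) + (real sg.ddT + (real (card (nccc_vertices G - VS)) - 1) * (if False then -1 else 0)) = 2 * real m + 1"
      using ef ev by simp
    show "(real sg.ddS + (real (card VS) - 1) * (if even m then -1 else 0)) * (real sg.ddT + (real (card (nccc_vertices G - VS)) - 1) * (if False then -1 else 0))
       - real (card (nccc_vertices G - VS)) * -1 * (real (card VS) * -1) = 0"
      using ef ev by (simp add: algebra_simps)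
    show "(2 * real m + 1)^2 = (2 * real m + 1)^2 - 4 * 0" by simp
    show "2 * real m + 1 \<noteq> 0" using m2 by simp
  qed
  also have "\<dots> = {#0#} + replicate_mset (2*m - 2) 2 + replicate_mset 2 (2 * real m + 1)"
    using ef ev by (simp add: numeral_eq_Suc)
  finally show ?thesis .
qed

lemma even_qspec: assumes ev: "even m"
  shows "qspec (nccc_vertices G) (nccc_adj G) = replicate_mset (2*m - 2) 2 + {# 2 * real m - 1,
          (2 * real m + 3 + sqrt ((2 * real m - 1) * (2 * real m + 7))) / 2,
          (2 * real m + 3 - sqrt ((2 * real m - 1) * (2 * real m + 7))) / 2 #}"
proof -
  note ef = even_facts[OF ev]
  have pos: "(2 * real m - 1) * (2 * real m + 7) \<ge> 0" using m2 by simp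
  have "qspec (nccc_vertices G) (nccc_adj G) = {# (2 * real m + 3 + sqrt ((2 * real m - 1) * (2 * real m + 7))) / 2,
          (2 * real m + 3 - sqrt ((2 * real m - 1) * (2 * real m + 7))) / 2 #}
    + replicate_mset (card VS - 1) (real sg.ddS - (if even m then 1 else 0)) + replicate_mset (card (nccc_vertices G - VS) - 1) (real sg.ddT - (if False then 1 else 0))"
    unfolding qspec_def sg.slap_mat_eq
  proof (rule sg.bf_spec2[OF neS neT])
    show "real (card (nccc_vertices G - VS)) * 1 \<noteq> 0" using ef m2 by simp
    show "real sg.ddS + (real (card VS) - 1) * (if even m then 1 else 0) + (real sg.ddT + (real (card (nccc_vertices G - VS)) - 1) * (if False then 1 else 0)) = 2 * real m + 3"
      using ef ev by simp
    show "(real sg.ddS + (real (card VS) - 1) * (if even m then 1 else 0)) * (real sg.ddT + (real (card (nccc_vertices G - VS)) - 1) * (if False then 1 else 0))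
       - real (card (nccc_vertices G - VS)) * 1 * (real (card VS) * 1) = 4"
      using ef ev by (simp add: algebra_simps)
    show "(sqrt ((2 * real m - 1) * (2 * real m + 7)))^2 = (2 * real m + 3)^2 - 4 * 4"
      using pos by (simp add: power2_eq_square algebra_simps)
    show "sqrt ((2 * real m - 1) * (2 * real m + 7)) \<noteq> 0" using m2 by simp
  qed
  also have "\<dots> = replicate_mset (2*m - 2) 2 + {# 2 * real m - 1,
          (2 * real m + 3 + sqrt ((2 * real m - 1) * (2 * real m + 7))) / 2,
          (2 * real m + 3 - sqrt ((2 * real m - 1) * (2 * real m + 7))) / 2 #}"
    using ef ev by (simp add: numeral_eq_Suc)
  finally show ?thesis .
qed

lemma even_avg: assumes ev: "even m"
  shows "avg_deg (nccc_vertices G) (nccc_adj G) = (8 * real m - 2) / (2 * real m + 1)"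
proof -
  note ef = even_facts[OF ev]
  have "2 * num_edges (nccc_vertices G) (nccc_adj G) = card VS * sg.ddS + card (nccc_vertices G - VS) * sg.ddT"
    by (rule sg.edges)
  then have "real (2 * num_edges (nccc_vertices G) (nccc_adj G)) = real (card VS) * real sg.ddS + real (card (nccc_vertices G - VS)) * real sg.ddT"
    by (metis of_nat_add of_nat_mult)
  then have E: "2 * real (num_edges (nccc_vertices G) (nccc_adj G)) = 8 * real m - 2" using ef by (simp add: algebra_simps)
  have V: "real (card (nccc_vertices G)) = 2 * real m + 1" using card_V ef by simp
  show ?thesis unfolding avg_deg_def E V ..
qed

lemma even_LE: assumes ev: "even m"
  shows "lap_energy (nccc_vertices G) (nccc_adj G) = 4 * (2 * real m - 1) * (2 * real m - 2) / (2 * real m + 1) + 4"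
proof -
  define D where "D = (8 * real m - 2) / (2 * real m + 1)"
  have mr: "real m \<ge> 2" using m2 by simp
  have pos: "2 * real m + 1 > 0" using mr by simp
  have D2: "D \<ge> 2" unfolding D_def using mr pos by (simp add: field_simps)
  have D4: "D \<le> 4" unfolding D_def using mr pos by (simp add: field_simps)
  have D3: "D \<le> 2 * real m + 1" using D4 mr by simp
  have "lap_energy (nccc_vertices G) (nccc_adj G) = (\<Sum>b\<in>#{#0#} + replicate_mset (2*m - 2) 2 + replicate_mset 2 (2 * real m + 1). \<bar>b - D\<bar>)"
    unfolding lap_energy_def even_lspec[OF ev] even_avg[OF ev] D_def ..
  also have "\<dots> = \<bar>0 - D\<bar> + real (2*m - 2) * \<bar>2 - D\<bar> + 2 * \<bar>2 * real m + 1 - D\<bar>" by simp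
  also have "\<dots> = D + (2 * real m - 2) * (D - 2) + 2 * (2 * real m + 1 - D)"
    using D2 D3 m2 by (simp add: of_nat_diff)
  also have "\<dots> = (2 * real m - 3) * D + 6" by (simp add: algebra_simps)
  also have "\<dots> = 4 * (2 * real m - 1) * (2 * real m - 2) / (2 * real m + 1) + 4"
  proof -
    have nz: "2 * real m + 1 \<noteq> 0" using pos by simp
    show ?thesis unfolding D_def using nz by (simp add: field_simps; simp add: algebra_simps)
  qed
  finally show ?thesis .
qed

lemma even_SE: assumes ev: "even m"
  shows "slap_energy (nccc_vertices G) (nccc_adj G) = 4 * (2 * real m - 1) * (2 * real m - 2) / (2 * real m + 1)
          + (2 * real m - 1) * (sqrt (1 + 8 / (2 * real m - 1)) - 1)"
proof -
  define D where "D = (8 * real m - 2) / (2 * real m + 1)"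
  define R where "R = sqrt ((2 * real m - 1) * (2 * real m + 7))"
  have mr: "real m \<ge> 2" using m2 by simp
  have pos: "2 * real m + 1 > 0" using mr by simp
  have D2: "D \<ge> 2" unfolding D_def using mr pos by (simp add: field_simps)
  have D4: "D \<le> 4" unfolding D_def using mr pos by (simp add: field_simps)
  have D5: "D \<le> 2 * real m - 1"
  proof -
    have sq: "2 * real m \<le> real m * real m" using mult_right_mono[OF mr, of "real m"] by simp
    have e: "(2 * real m - 1) * (2 * real m + 1) = 4 * (real m * real m) - 1" by (simp add: algebra_simps)
    have "8 * real m - 2 \<le> (2 * real m - 1) * (2 * real m + 1)" unfolding e using sq mr by linarith
    then show ?thesis unfolding D_def using pos by (simp add: field_simps)
  qed
  have R1: "R \<ge> 2 * real m - 1"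
  proof -
    have "(2 * real m - 1)^2 \<le> (2 * real m - 1) * (2 * real m + 7)" using mr by (simp add: power2_eq_square)
    then have "sqrt ((2 * real m - 1)^2) \<le> R" unfolding R_def by (rule real_sqrt_le_mono)
    then show ?thesis using mr by simp
  qed
  have RR: "(2 * real m - 1) * sqrt (1 + 8 / (2 * real m - 1)) = R"
  proof -
    have p1: "2 * real m - 1 > 0" using mr by simp
    have "(2 * real m - 1) * sqrt (1 + 8 / (2 * real m - 1)) = sqrt ((2 * real m - 1)^2) * sqrt (1 + 8 / (2 * real m - 1))"
      using p1 by simp
    also have "\<dots> = sqrt ((2 * real m - 1)^2 * (1 + 8 / (2 * real m - 1)))" by (simp add: real_sqrt_mult)
    also have "(2 * real m - 1)^2 * (1 + 8 / (2 * real m - 1)) = (2 * real m - 1) * (2 * real m + 7)"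
      using p1 by (simp add: power2_eq_square field_simps)
    finally show ?thesis unfolding R_def .
  qed
  have "slap_energy (nccc_vertices G) (nccc_adj G) = (\<Sum>b\<in>#replicate_mset (2*m - 2) 2 + {# 2 * real m - 1, (2 * real m + 3 + R) / 2, (2 * real m + 3 - R) / 2 #}. \<bar>b - D\<bar>)"
    unfolding slap_energy_def even_qspec[OF ev] even_avg[OF ev] D_def R_def ..
  also have "\<dots> = real (2*m - 2) * \<bar>2 - D\<bar> + (\<bar>2 * real m - 1 - D\<bar> + (\<bar>(2 * real m + 3 + R) / 2 - D\<bar> + \<bar>(2 * real m + 3 - R) / 2 - D\<bar>))" by simp
  also have "\<dots> = (2 * real m - 2) * (D - 2) + (2 * real m - 1 - D) + ((2 * real m + 3 + R) / 2 - D) + (D - (2 * real m + 3 - R) / 2)"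
  proof -
    have a1: "\<bar>2 - D\<bar> = D - 2" using D2 by simp
    have a2: "\<bar>2 * real m - 1 - D\<bar> = 2 * real m - 1 - D" using D5 by simp
    have a3: "\<bar>(2 * real m + 3 + R) / 2 - D\<bar> = (2 * real m + 3 + R) / 2 - D" using D4 R1 mr by simp
    have a4: "\<bar>(2 * real m + 3 - R) / 2 - D\<bar> = D - (2 * real m + 3 - R) / 2" using D2 R1 mr by simp
    show ?thesis unfolding a1 a2 a3 a4 using m2 by (simp add: of_nat_diff)
  qed
  also have "\<dots> = (2 * real m - 3) * D - 2 * real m + 3 + R" by (simp add: field_simps)
  also have "\<dots> = 4 * (2 * real m - 1) * (2 * real m - 2) / (2 * real m + 1) + ((2 * real m - 1) * sqrt (1 + 8 / (2 * real m - 1)) - (2 * real m - 1))"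
  proof -
    have nz: "2 * real m + 1 \<noteq> 0" using pos by simp
    show ?thesis unfolding RR D_def using nz by (simp add: field_simps; simp add: algebra_simps)
  qed
  also have "\<dots> = 4 * (2 * real m - 1) * (2 * real m - 2) / (2 * real m + 1) + (2 * real m - 1) * (sqrt (1 + 8 / (2 * real m - 1)) - 1)"
    by (simp add: algebra_simps)
  finally show ?thesis .
qed

lemma odd_facts: assumes od: "odd m"
  shows "m \<ge> 3" "card VS = 4" "card (nccc_vertices G - VS) = 2 * m - 2" "real (card (nccc_vertices G - VS)) = 2 * real m - 2"
    "real sg.ddS = 2 * real m - 2" "real sg.ddT = 4"
proof -
  show m3: "m \<ge> 3" using m2 od by (cases "m = 2") auto
  show c1: "card VS = 4" using cardS od by simp
  show c2: "card (nccc_vertices G - VS) = 2 * m - 2" using cardT od by simp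
  show "real (card (nccc_vertices G - VS)) = 2 * real m - 2" using c2 m2 by (simp add: of_nat_diff)
  show "real sg.ddS = 2 * real m - 2" unfolding sg.ddS_def using c1 c2 od m2 by (simp add: of_nat_diff)
  show "real sg.ddT = 4" unfolding sg.ddT_def using c1 by simp
qed

lemma odd_gspec: assumes od: "odd m"
  shows "gspec (nccc_vertices G) (nccc_adj G) = replicate_mset (2*m) 0 + {# 4 * sqrt ((real m - 1) / 2),
          - 4 * sqrt ((real m - 1) / 2) #}"
proof -
  note ef = odd_facts[OF od]
  have mr: "real m \<ge> 3" using ef(1) by simp
  have "gspec (nccc_vertices G) (nccc_adj G) = {# (0 + 8 * sqrt ((real m - 1) / 2)) / 2, (0 - 8 * sqrt ((real m - 1) / 2)) / 2 #}
    + replicate_mset (card VS - 1) (0 - (if even m then 1 else 0)) + replicate_mset (card (nccc_vertices G - VS) - 1) (0 - (if False then 1 else 0))"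
    unfolding gspec_def sg.adj_mat_eq
  proof (rule sg.bf_spec2[OF neS neT])
    show "real (card (nccc_vertices G - VS)) * 1 \<noteq> 0" using ef m2 by simp
    show "0 + (real (card VS) - 1) * (if even m then 1 else 0) + (0 + (real (card (nccc_vertices G - VS)) - 1) * (if False then 1 else 0)) = 0"
      using ef od by simp
    show "(0 + (real (card VS) - 1) * (if even m then 1 else 0)) * (0 + (real (card (nccc_vertices G - VS)) - 1) * (if False then 1 else 0))
       - real (card (nccc_vertices G - VS)) * 1 * (real (card VS) * 1) = - 8 * (real m - 1)"
      using ef od by (simp add: algebra_simps)
    show "(8 * sqrt ((real m - 1) / 2))^2 = 0^2 - 4 * (- 8 * (real m - 1))"
      using mr by (simp add: power_mult_distrib)
    show "8 * sqrt ((real m - 1) / 2) \<noteq> 0" using mr by simp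
  qed
  also have "\<dots> = replicate_mset (2*m) 0 + {# 4 * sqrt ((real m - 1) / 2), - 4 * sqrt ((real m - 1) / 2) #}"
  proof -
    have "2 * m = 3 + (2 * m - 3)" using ef(1) by simp
    then have r: "replicate_mset (2*m) (0::real) = replicate_mset 3 0 + replicate_mset (2*m - 3) 0"
      by (metis rep_add)
    show ?thesis unfolding r using ef od by (simp add: numeral_eq_Suc)
  qed
  finally show ?thesis .
qed

lemma odd_energy: assumes od: "odd m"
  shows "energy (nccc_vertices G) (nccc_adj G) = 8 * sqrt ((real m - 1) / 2)"
  unfolding energy_def odd_gspec[OF od] using m2 by simp

lemma odd_lspec: assumes od: "odd m"
  shows "lspec (nccc_vertices G) (nccc_adj G) = {#0#} + replicate_mset (2*m - 3) 4 + replicate_mset 3 (2 * (real m - 1))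
          + {# 2 * (real m + 1) #}"
proof -
  note ef = odd_facts[OF od]
  have "lspec (nccc_vertices G) (nccc_adj G) = {# (2 * real m + 2 + (2 * real m + 2)) / 2, (2 * real m + 2 - (2 * real m + 2)) / 2 #}
    + replicate_mset (card VS - 1) (real sg.ddS - (if even m then -1 else 0)) + replicate_mset (card (nccc_vertices G - VS) - 1) (real sg.ddT - (if False then -1 else 0))"
    unfolding lspec_def sg.lap_mat_eq
  proof (rule sg.bf_spec2[OF neS neT])
    show "real (card (nccc_vertices G - VS)) * -1 \<noteq> 0" using ef m2 by simp
    show "real sg.ddS + (real (card VS) - 1) * (if even m then -1 else 0) + (real sg.ddT + (real (card (nccc_vertices G - VS)) - 1) * (if False then -1 else 0)) = 2 * real m + 2"
      using ef od by simp
    show "(real sg.ddS + (real (card VS) - 1) * (if even m then -1 else 0)) * (real sg.ddT + (real (card (nccc_vertices G - VS)) - 1) * (if False then -1 else 0))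
       - real (card (nccc_vertices G - VS)) * -1 * (real (card VS) * -1) = 0"
      using ef od by (simp add: algebra_simps)
    show "(2 * real m + 2)^2 = (2 * real m + 2)^2 - 4 * 0" by simp
    show "2 * real m + 2 \<noteq> 0" using m2 by simp
  qed
  also have "\<dots> = {#0#} + replicate_mset (2*m - 3) 4 + replicate_mset 3 (2 * (real m - 1)) + {# 2 * (real m + 1) #}"
    unfolding ef(5) ef(6) using ef od by (simp add: numeral_eq_Suc algebra_simps)
  finally show ?thesis .
qed

lemma odd_qspec: assumes od: "odd m"
  shows "qspec (nccc_vertices G) (nccc_adj G) = {#0#} + replicate_mset (2*m - 3) 4 + replicate_mset 3 (2 * (real m - 1))
          + {# 2 * (real m + 1) #}"
proof -
  note ef = odd_facts[OF od]
  have "qspec (nccc_vertices G) (nccc_adj G) = {# (2 * real m + 2 + (2 * real m + 2)) / 2, (2 * real m + 2 - (2 * real m + 2)) / 2 #}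
    + replicate_mset (card VS - 1) (real sg.ddS - (if even m then 1 else 0)) + replicate_mset (card (nccc_vertices G - VS) - 1) (real sg.ddT - (if False then 1 else 0))"
    unfolding qspec_def sg.slap_mat_eq
  proof (rule sg.bf_spec2[OF neS neT])
    show "real (card (nccc_vertices G - VS)) * 1 \<noteq> 0" using ef m2 by simp
    show "real sg.ddS + (real (card VS) - 1) * (if even m then 1 else 0) + (real sg.ddT + (real (card (nccc_vertices G - VS)) - 1) * (if False then 1 else 0)) = 2 * real m + 2"
      using ef od by simp
    show "(real sg.ddS + (real (card VS) - 1) * (if even m then 1 else 0)) * (real sg.ddT + (real (card (nccc_vertices G - VS)) - 1) * (if False then 1 else 0))
       - real (card (nccc_vertices G - VS)) * 1 * (real (card VS) * 1) = 0"
      using ef od by (simp add: algebra_simps)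
    show "(2 * real m + 2)^2 = (2 * real m + 2)^2 - 4 * 0" by simp
    show "2 * real m + 2 \<noteq> 0" using m2 by simp
  qed
  also have "\<dots> = {#0#} + replicate_mset (2*m - 3) 4 + replicate_mset 3 (2 * (real m - 1)) + {# 2 * (real m + 1) #}"
    unfolding ef(5) ef(6) using ef od by (simp add: numeral_eq_Suc algebra_simps)
  finally show ?thesis .
qed

lemma odd_avg: assumes od: "odd m"
  shows "avg_deg (nccc_vertices G) (nccc_adj G) = (16 * real m - 16) / (2 * real m + 2)"
proof -
  note ef = odd_facts[OF od]
  have "2 * num_edges (nccc_vertices G) (nccc_adj G) = card VS * sg.ddS + card (nccc_vertices G - VS) * sg.ddT"
    by (rule sg.edges)
  then have "real (2 * num_edges (nccc_vertices G) (nccc_adj G)) = real (card VS) * real sg.ddS + real (card (nccc_vertices G - VS)) * real sg.ddT"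
    by (metis of_nat_add of_nat_mult)
  then have E: "2 * real (num_edges (nccc_vertices G) (nccc_adj G)) = 16 * real m - 16" using ef by (simp add: algebra_simps)
  have V: "real (card (nccc_vertices G)) = 2 * real m + 2" using card_V ef by simp
  show ?thesis unfolding avg_deg_def E V ..
qed

lemma odd_LE: assumes od: "odd m"
  shows "lap_energy (nccc_vertices G) (nccc_adj G) = 16 * (real m - 1) * (real m - 3) / (real m + 1) + 8"
proof -
  note ef = odd_facts[OF od]
  define D where "D = (16 * real m - 16) / (2 * real m + 2)"
  have mr: "real m \<ge> 3" using ef(1) by simp
  have pos: "2 * real m + 2 > 0" using mr by simp
  have D4: "D \<ge> 4" unfolding D_def using mr pos by (simp add: field_simps)
  have D5: "D \<le> 2 * (real m - 1)"
  proof -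
    have "0 \<le> (2 * real m - 2) * (2 * real m - 6)" using mr by simp
    then have "16 * real m - 16 \<le> 2 * (real m - 1) * (2 * real m + 2)" by (simp add: algebra_simps)
    then show ?thesis unfolding D_def using pos by (simp add: field_simps)
  qed
  have "lap_energy (nccc_vertices G) (nccc_adj G) = (\<Sum>b\<in>#{#0#} + replicate_mset (2*m - 3) 4 + replicate_mset 3 (2 * (real m - 1))
          + {# 2 * (real m + 1) #}. \<bar>b - D\<bar>)"
    unfolding lap_energy_def odd_lspec[OF od] odd_avg[OF od] D_def ..
  also have "\<dots> = \<bar>0 - D\<bar> + real (2*m - 3) * \<bar>4 - D\<bar> + 3 * \<bar>2 * (real m - 1) - D\<bar> + \<bar>2 * (real m + 1) - D\<bar>" by simp
  also have "\<dots> = D + (2 * real m - 3) * (D - 4) + 3 * (2 * (real m - 1) - D) + (2 * (real m + 1) - D)"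
    using D4 D5 ef(1) by (simp add: of_nat_diff)
  also have "\<dots> = (2 * real m - 6) * D + 8" by (simp add: algebra_simps)
  also have "\<dots> = 16 * (real m - 1) * (real m - 3) / (real m + 1) + 8"
  proof -
    have nz: "2 * real m + 2 \<noteq> 0" "real m + 1 \<noteq> 0" using pos by auto
    show ?thesis unfolding D_def using nz by (simp add: field_simps; simp add: algebra_simps)
  qed
  finally show ?thesis .
qed

lemma odd_SE: assumes od: "odd m"
  shows "slap_energy (nccc_vertices G) (nccc_adj G) = lap_energy (nccc_vertices G) (nccc_adj G)"
  unfolding slap_energy_def lap_energy_def odd_qspec[OF od] odd_lspec[OF od] ..

end

theorem corollary2p10:
  fixes m :: nat
  assumes "m \<ge> 2"
  defines "V \<equiv> nccc_vertices (SD m)" and "adj \<equiv> nccc_adj (SD m)"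
  shows
   "(even m \<longrightarrow>
      gspec V adj = replicate_mset (2*m - 2) 0 + {# -1,
          (1 + sqrt (16 * real m - 7)) / 2, (1 - sqrt (16 * real m - 7)) / 2 #}
    \<and> energy V adj = 1 + sqrt (16 * real m - 7)
    \<and> lspec V adj = {#0#} + replicate_mset (2*m - 2) 2 + replicate_mset 2 (2 * real m + 1)
    \<and> lap_energy V adj = 4 * (2 * real m - 1) * (2 * real m - 2) / (2 * real m + 1) + 4
    \<and> qspec V adj = replicate_mset (2*m - 2) 2 + {# 2 * real m - 1,
          (2 * real m + 3 + sqrt ((2 * real m - 1) * (2 * real m + 7))) / 2,
          (2 * real m + 3 - sqrt ((2 * real m - 1) * (2 * real m + 7))) / 2 #}
    \<and> slap_energy V adj = 4 * (2 * real m - 1) * (2 * real m - 2) / (2 * real m + 1)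
          + (2 * real m - 1) * (sqrt (1 + 8 / (2 * real m - 1)) - 1))
  \<and> (odd m \<longrightarrow>
      gspec V adj = replicate_mset (2*m) 0 + {# 4 * sqrt ((real m - 1) / 2),
          - 4 * sqrt ((real m - 1) / 2) #}
    \<and> energy V adj = 8 * sqrt ((real m - 1) / 2)
    \<and> lspec V adj = {#0#} + replicate_mset (2*m - 3) 4 + replicate_mset 3 (2 * (real m - 1))
          + {# 2 * (real m + 1) #}
    \<and> qspec V adj = lspec V adj
    \<and> lap_energy V adj = 16 * (real m - 1) * (real m - 3) / (real m + 1) + 8
    \<and> slap_energy V adj = lap_energy V adj)"
proof -
  interpret sd m by unfold_locales (rule assms(1))
  show ?thesis unfolding V_def adj_def
    by (intro conjI impI) (simp_all add: even_gspec even_energy even_lspec even_LE even_qspec even_SE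
      odd_gspec odd_energy odd_lspec odd_qspec odd_LE odd_SE)
qed


end
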